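(* The matrix $T^{(+)}(\lambda):=\tilde T^{QTM\,t}(-\lambda)$ is a representation of the Yang–Baxter algebra $R_{12}(\lambda-\mu)T_1(\lambda)T_2(\mu)=T_2(\mu)T_1(\lambda)R_{12}(\lambda-\mu)$ and satisfies the crossing relation \[ (T^{(+)a})^a(\lambda)=\delta(\lambda)\,T^{(+)}(\lambda-2\eta),\qquad \delta(\lambda)=\left[\frac{b(-\lambda+\frac{\beta}{N}-\eta)\,b(-\lambda-\frac{\beta}{N})}{b(-\lambda-\frac{\beta}{N}+\eta)\,b(-\lambda+\frac{\beta}{N})}\right]^{N/2}, \] where the antipode is $T^a(\lambda)=(T^{-1}(\lambda))^t$ (inverse and transpose in the $2\times2$ auxiliary space).
   Context: XXZ setting: $R(\lambda)=\begin{pmatrix}1&0&0&0\\0&b(\lambda)&c(\lambda)&0\\0&c(\lambda)&b(\lambda)&0\\0&0&0&1\end{pmatrix}$, $b(\lambda)=\sinh\lambda/\sinh(\lambda+\eta)$, $c(\lambda)=\sinh\eta/\sinh(\lambda+\eta)$, $\beta>0$, $N$ even. On $(\mathbb C^2)^{\otimes N}$: $\mathcal L_n(\lambda,\mu)=R_{0n}(\lambda-\mu)$, $\tilde{\mathcal L}_n(\mu,\lambda)=R^{t_0}_{n0}(\mu-\lambda)$ ($0$ the auxiliary $\mathbb C^2$); $T^{QTM}(\lambda)=\tilde{\mathcal L}_N(-\tfrac{\beta}{N},\lambda)\mathcal L_{N-1}(\lambda,\tfrac{\beta}{N})\cdots\tilde{\mathcal L}_2(-\tfrac{\beta}{N},\lambda)\mathcal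 L_1(\lambda,\tfrac{\beta}{N})$; $a(\lambda)=b^{N/2}(-\tfrac{\beta}{N}-\lambda)$; $\tilde T^{QTM}(\lambda)=T^{QTM}(\lambda)/a(\lambda)$; $t$ denotes transposition in the auxiliary space. *)

theory Defs
  imports Complex_Main
begin

text \<open>
  The local space C^2 has basis indexed by bool (False = first basis vector).
  A basis state of the quantum space (C^2)^(tensor N) is a bool list of length N
  (entry k = state of site k+1).  An operator on the quantum space is given by its
  matrix entries; an element of End(C^2 (x) quantum space) is a 2x2 auxiliary matrix
  whose entries are quantum-space operators.  All equalities of operators are
  understood on the basis states (lists of length N).
\<close>

type_synonym qop = "bool list \<Rightarrow> bool list \<Rightarrow> complex"
type_synonym amat = "bool \<Rightarrow> bool \<Rightarrow> qop"

definition states :: "nat \<Rightarrow> bool list set" where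
  "states N = {s. length s = N}"

definition bfun :: "complex \<Rightarrow> complex \<Rightarrow> complex" where
  "bfun \<eta> l = sinh l / sinh (l + \<eta>)"

definition cfun :: "complex \<Rightarrow> complex \<Rightarrow> complex" where
  "cfun \<eta> l = sinh \<eta> / sinh (l + \<eta>)"

text \<open>R-matrix entries: row index (a1,a2), column index (b1,b2) in C^2 (x) C^2.\<close>
definition Rmat :: "complex \<Rightarrow> complex \<Rightarrow> bool \<Rightarrow> bool \<Rightarrow> bool \<Rightarrow> bool \<Rightarrow> complex" where
  "Rmat \<eta> l a1 a2 b1 b2 =
     (if a1 = a2 \<and> b1 = b2 \<and> a1 = b1 then 1
      else if a1 = b1 \<and> a2 = b2 \<and> a1 \<noteq> a2 then bfun \<eta> l
      else if a1 = b2 \<and> a2 = b1 \<and> a1 \<noteq> a2 then cfun \<eta> l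
      else 0)"

definition op_mult :: "nat \<Rightarrow> qop \<Rightarrow> qop \<Rightarrow> qop" where
  "op_mult N A B s t = (\<Sum>u\<in>states N. A s u * B u t)"

definition am_mult :: "nat \<Rightarrow> amat \<Rightarrow> amat \<Rightarrow> amat" where
  "am_mult N X Y a c = (\<lambda>s t. \<Sum>b\<in>(UNIV::bool set). op_mult N (X a b) (Y b c) s t)"

definition am_id :: amat where
  "am_id a b s t = (if a = b \<and> s = t then 1 else 0)"

definition am_eq :: "nat \<Rightarrow> amat \<Rightarrow> amat \<Rightarrow> bool" where
  "am_eq N X Y \<longleftrightarrow> (\<forall>a b. \<forall>s\<in>states N. \<forall>t\<in>states N. X a b s t = Y a b s t)"

definition am_is_inverse :: "nat \<Rightarrow> amat \<Rightarrow> amat \<Rightarrow> bool" where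
  "am_is_inverse N X Y \<longleftrightarrow> am_eq N (am_mult N X Y) am_id \<and> am_eq N (am_mult N Y X) am_id"

definition am_invertible :: "nat \<Rightarrow> amat \<Rightarrow> bool" where
  "am_invertible N X \<longleftrightarrow> (\<exists>Y. am_is_inverse N X Y)"

definition am_inv :: "nat \<Rightarrow> amat \<Rightarrow> amat" where
  "am_inv N X = (SOME Y. am_is_inverse N X Y)"

definition am_transp :: "amat \<Rightarrow> amat" where
  "am_transp X a b = X b a"

definition antipode :: "nat \<Rightarrow> amat \<Rightarrow> amat" where
  "antipode N X = am_transp (am_inv N X)"

text \<open>Identity on all sites except site index n (0-based).\<close>
definition same_off :: "nat \<Rightarrow> bool list \<Rightarrow> bool list \<Rightarrow> complex" where
  "same_off n s t = (if \<forall>k<length s. k \<noteq> n \<longrightarrow> s ! k = t ! k then 1 else 0)"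

text \<open>L_n(lambda,mu) = R_{0n}(lambda - mu), site n given by 0-based index n.\<close>
definition Lop :: "complex \<Rightarrow> nat \<Rightarrow> complex \<Rightarrow> complex \<Rightarrow> amat" where
  "Lop \<eta> n l \<mu> a b s t = Rmat \<eta> (l - \<mu>) a (s ! n) b (t ! n) * same_off n s t"

text \<open>Ltilde_n(mu,lambda) = R^{t_0}_{n0}(mu - lambda), site n given by 0-based index n.\<close>
definition Ltil :: "complex \<Rightarrow> nat \<Rightarrow> complex \<Rightarrow> complex \<Rightarrow> amat" where
  "Ltil \<eta> n \<mu> l a b s t = Rmat \<eta> (\<mu> - l) (s ! n) b (t ! n) a * same_off n s t"

definition bN :: "real \<Rightarrow> nat \<Rightarrow> complex" where
  "bN \<beta> N = complex_of_real \<beta> / of_nat N"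

definition qtm_site :: "complex \<Rightarrow> real \<Rightarrow> nat \<Rightarrow> nat \<Rightarrow> complex \<Rightarrow> amat" where
  "qtm_site \<eta> \<beta> N m l =
     (if even m then Ltil \<eta> (m - 1) (- bN \<beta> N) l else Lop \<eta> (m - 1) l (bN \<beta> N))"

fun qtm_prod :: "complex \<Rightarrow> real \<Rightarrow> nat \<Rightarrow> nat \<Rightarrow> complex \<Rightarrow> amat" where
  "qtm_prod \<eta> \<beta> N 0 l = am_id"
| "qtm_prod \<eta> \<beta> N (Suc m) l = am_mult N (qtm_site \<eta> \<beta> N (Suc m) l) (qtm_prod \<eta> \<beta> N m l)"

definition TQTM :: "complex \<Rightarrow> real \<Rightarrow> nat \<Rightarrow> complex \<Rightarrow> amat" where
  "TQTM \<eta> \<beta> N l = qtm_prod \<eta> \<beta> N N l"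

definition afun :: "complex \<Rightarrow> real \<Rightarrow> nat \<Rightarrow> complex \<Rightarrow> complex" where
  "afun \<eta> \<beta> N l = bfun \<eta> (- bN \<beta> N - l) ^ (N div 2)"

definition TQTMt :: "complex \<Rightarrow> real \<Rightarrow> nat \<Rightarrow> complex \<Rightarrow> amat" where
  "TQTMt \<eta> \<beta> N l a b s t = TQTM \<eta> \<beta> N l a b s t / afun \<eta> \<beta> N l"

definition Tplus :: "complex \<Rightarrow> real \<Rightarrow> nat \<Rightarrow> complex \<Rightarrow> amat" where
  "Tplus \<eta> \<beta> N l = am_transp (TQTMt \<eta> \<beta> N (- l))"

definition delta :: "complex \<Rightarrow> real \<Rightarrow> nat \<Rightarrow> complex \<Rightarrow> complex" where
  "delta \<eta> \<beta> N l =
     ((bfun \<eta> (- l + bN \<beta> N - \<eta>) * bfun \<eta> (- l - bN \<beta> N)) /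
      (bfun \<eta> (- l - bN \<beta> N + \<eta>) * bfun \<eta> (- l + bN \<beta> N))) ^ (N div 2)"

definition RTT :: "complex \<Rightarrow> nat \<Rightarrow> (complex \<Rightarrow> amat) \<Rightarrow> complex \<Rightarrow> complex \<Rightarrow> bool" where
  "RTT \<eta> N T l \<mu> \<longleftrightarrow>
    (\<forall>a c b d. \<forall>s\<in>states N. \<forall>t\<in>states N.
       (\<Sum>e\<in>(UNIV::bool set). \<Sum>f\<in>(UNIV::bool set).
          Rmat \<eta> (l - \<mu>) a c e f * op_mult N (T l e b) (T \<mu> f d) s t)
     = (\<Sum>e\<in>(UNIV::bool set). \<Sum>f\<in>(UNIV::bool set).
          op_mult N (T \<mu> c e) (T l a f) s t * Rmat \<eta> (l - \<mu>) f e b d))"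

text \<open>Genericity of a spectral parameter: all the hyperbolic sines that occur as
  denominators (or whose vanishing destroys invertibility) are nonzero.\<close>
definition generic :: "complex \<Rightarrow> real \<Rightarrow> nat \<Rightarrow> complex \<Rightarrow> bool" where
  "generic \<eta> \<beta> N l \<longleftrightarrow>
     (\<forall>k::int. -3 \<le> k \<and> k \<le> 3 \<longrightarrow>
        sinh (l + bN \<beta> N + of_int k * \<eta>) \<noteq> 0 \<and> sinh (l - bN \<beta> N + of_int k * \<eta>) \<noteq> 0)"

end

theory Submission
  imports Defs
begin


type_synonym 'i gm = "'i \<Rightarrow> 'i \<Rightarrow> qop"

definition gmult :: "nat \<Rightarrow> ('i::finite) gm \<Rightarrow> 'i gm \<Rightarrow> 'i gm" where
  "gmult N X Y i k = (\<lambda>s t. \<Sum>j\<in>UNIV. op_mult N (X i j) (Y j k) s t)"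

definition geq :: "nat \<Rightarrow> 'i gm \<Rightarrow> 'i gm \<Rightarrow> bool" where
  "geq N X Y \<longleftrightarrow> (\<forall>i j. \<forall>s\<in>states N. \<forall>t\<in>states N. X i j s t = Y i j s t)"

definition gid :: "'i gm" where "gid i j s t = (if i = j \<and> s = t then 1 else 0)"

definition gsc :: "complex \<Rightarrow> 'i gm \<Rightarrow> 'i gm" where "gsc c X i j s t = c * X i j s t"

lemma am_mult_gmult: "am_mult N = gmult N"
  by (auto simp: fun_eq_iff am_mult_def gmult_def)
lemma am_eq_geq: "am_eq N = geq N" by (auto simp: fun_eq_iff am_eq_def geq_def)
lemma am_id_gid: "am_id = gid" by (auto simp: fun_eq_iff am_id_def gid_def)

lemma finite_states[simp]: "finite (states N)"
proof -
  have "states N = {xs. set xs \<subseteq> (UNIV::bool set) \<and> length xs = N}" by (auto simp: states_def)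
  thus ?thesis using finite_lists_length_eq[of "UNIV::bool set" N] by simp
qed

lemma geq_refl[simp]: "geq N X X" by (simp add: geq_def)
lemma geq_sym: "geq N X Y \<Longrightarrow> geq N Y X" by (simp add: geq_def)
lemma geq_trans[trans]: "geq N X Y \<Longrightarrow> geq N Y Z \<Longrightarrow> geq N X Z" by (simp add: geq_def)

lemma op_mult_assoc: "op_mult N (op_mult N A B) C = op_mult N A (op_mult N B C)"
  unfolding op_mult_def fun_eq_iff
  by (simp add: sum_distrib_left sum_distrib_right mult.assoc) (intro allI sum.swap)

lemma op_mult_sum_left: "op_mult N (\<lambda>s t. \<Sum>m\<in>M. F m s t) B s t = (\<Sum>m\<in>M. op_mult N (F m) B s t)"
  unfolding op_mult_def by (simp add: sum_distrib_right) (rule sum.swap)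

lemma op_mult_sum_right: "op_mult N A (\<lambda>s t. \<Sum>m\<in>M. F m s t) s t = (\<Sum>m\<in>M. op_mult N A (F m) s t)"
  unfolding op_mult_def by (simp add: sum_distrib_left) (rule sum.swap)

lemma gmult_assoc: "gmult N (gmult N X Y) Z = gmult N X (gmult N Y Z)"
  unfolding fun_eq_iff gmult_def
  by (simp add: op_mult_sum_left op_mult_sum_right op_mult_assoc) (intro allI sum.swap)

lemma op_mult_cong:
  assumes "\<And>s t. s \<in> states N \<Longrightarrow> t \<in> states N \<Longrightarrow> A s t = A' s t"
      and "\<And>s t. s \<in> states N \<Longrightarrow> t \<in> states N \<Longrightarrow> B s t = B' s t"
      and "s \<in> states N" "t \<in> states N"
  shows "op_mult N A B s t = op_mult N A' B' s t"
  unfolding op_mult_def using assms by (intro sum.cong) auto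

lemma gmult_cong: "geq N X X' \<Longrightarrow> geq N Y Y' \<Longrightarrow> geq N (gmult N X Y) (gmult N X' Y')"
  unfolding geq_def gmult_def by (auto intro!: sum.cong op_mult_cong)

lemma if01_mult: "(if P then 1 else 0) * (x::complex) = (if P then x else 0)" by simp
lemma mult_if01: "(x::complex) * (if P then 1 else 0) = (if P then x else 0)" by simp

lemma op_mult_gid_left: "s \<in> states N \<Longrightarrow> op_mult N (gid i k) B s t = (if i = k then B s t else 0)"
  unfolding op_mult_def gid_def by (simp add: if01_mult sum.delta)

lemma op_mult_gid_right: "t \<in> states N \<Longrightarrow> op_mult N A (gid k j) s t = (if k = j then A s t else 0)"
  unfolding op_mult_def gid_def by (simp add: mult_if01 sum.delta')

lemma gmult_id_left: "geq N (gmult N gid X) X"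
  by (simp add: geq_def gmult_def op_mult_gid_left sum.delta')

lemma gmult_id_right: "geq N (gmult N X gid) X"
  by (simp add: geq_def gmult_def op_mult_gid_right sum.delta)


section \<open>Local operators\<close>

definition loc :: "nat \<Rightarrow> ('i \<Rightarrow> 'i \<Rightarrow> bool \<Rightarrow> bool \<Rightarrow> complex) \<Rightarrow> 'i gm" where
  "loc n x i j s t = x i j (s!n) (t!n) * same_off n s t"

lemma same_off_self_upd: "n < length s \<Longrightarrow> same_off n s (s[n:=q]) = 1"
  by (simp add: same_off_def nth_list_update)

lemma same_off_upd: "n < length s \<Longrightarrow> same_off n (s[n:=q]) t = same_off n s t"
  by (simp add: same_off_def nth_list_update)

lemma same_off_zero:
  assumes "length u = length s" "n < length s" "u \<noteq> s[n:=False]" "u \<noteq> s[n:=True]"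
  shows "same_off n s u = 0"
proof (rule ccontr)
  assume "same_off n s u \<noteq> 0"
  hence h: "\<forall>k<length s. k \<noteq> n \<longrightarrow> s!k = u!k" by (simp add: same_off_def split: if_splits)
  have "u = s[n := u!n]"
    using h assms(1,2) by (auto simp: list_eq_iff_nth_eq nth_list_update)
  moreover have "u!n = False \<or> u!n = True" by simp
  ultimately show False using assms(3,4) by metis
qed

lemma sum_same_off:
  assumes s: "s \<in> states N" and n: "n < N"
  shows "(\<Sum>u\<in>states N. same_off n s u * f u) = f (s[n:=False]) + f (s[n:=True])"
proof -
  have ls: "length s = N" using s by (simp add: states_def)
  let ?S = "{s[n:=False], s[n:=True]}"
  have sub: "?S \<subseteq> states N" using ls by (auto simp: states_def)
  have "(\<Sum>u\<in>states N. same_off n s u * f u) = (\<Sum>u\<in>?S. same_off n s u * f u)"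
    by (rule sum.mono_neutral_right[OF finite_states sub])
       (auto simp: states_def ls n same_off_zero)
  also have "\<dots> = f (s[n:=False]) + f (s[n:=True])"
  proof -
    have d: "s[n:=False] \<noteq> s[n:=True]"
    proof
      assume "s[n:=False] = s[n:=True]"
      hence "s[n:=False]!n = s[n:=True]!n" by simp
      thus False using ls n by simp
    qed
    show ?thesis using d ls n by (simp add: same_off_self_upd)
  qed
  finally show ?thesis .
qed

lemma op_mult_loc_left:
  assumes s: "s \<in> states N" and n: "n < N"
  shows "op_mult N (loc n x i j) B s t =
     x i j (s!n) False * B (s[n:=False]) t + x i j (s!n) True * B (s[n:=True]) t"
proof -
  have ls: "length s = N" using s by (simp add: states_def)
  have "op_mult N (loc n x i j) B s t = (\<Sum>u\<in>states N. same_off n s u * (x i j (s!n) (u!n) * B u t))"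
    unfolding op_mult_def loc_def by (simp add: ac_simps)
  also have "\<dots> = x i j (s!n) False * B (s[n:=False]) t + x i j (s!n) True * B (s[n:=True]) t"
    using sum_same_off[OF s n] ls n by simp
  finally show ?thesis .
qed

definition lmult :: "('i::finite \<Rightarrow> 'i \<Rightarrow> bool \<Rightarrow> bool \<Rightarrow> complex) \<Rightarrow> ('i \<Rightarrow> 'i \<Rightarrow> bool \<Rightarrow> bool \<Rightarrow> complex)
   \<Rightarrow> ('i \<Rightarrow> 'i \<Rightarrow> bool \<Rightarrow> bool \<Rightarrow> complex)" where
  "lmult x y i k p r = (\<Sum>j\<in>UNIV. \<Sum>q\<in>UNIV. x i j p q * y j k q r)"

lemma gmult_loc_loc: "n < N \<Longrightarrow> geq N (gmult N (loc n x) (loc n y)) (loc n (lmult x y))"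
  unfolding geq_def gmult_def
  by (auto simp: op_mult_loc_left loc_def lmult_def states_def same_off_upd sum_distrib_right
     UNIV_bool algebra_simps sum_distrib_left)

lemma same_off_upd_other:
  assumes "m \<noteq> n" "n < length s" "length t = length s"
  shows "same_off m (s[n:=q]) t = (if q = t!n \<and> (\<forall>k<length s. k \<noteq> n \<and> k \<noteq> m \<longrightarrow> s!k = t!k) then 1 else 0)"
  using assms unfolding same_off_def by (auto simp: nth_list_update)

lemma op_mult_loc_loc_diff:
  assumes s: "s \<in> states N" and t: "t \<in> states N" and n: "n < N" and m: "m < N" and nm: "n \<noteq> m"
  shows "op_mult N (loc n x i j) (loc m y k l) s t =
     x i j (s!n) (t!n) * y k l (s!m) (t!m) * (if \<forall>k<N. k \<noteq> n \<and> k \<noteq> m \<longrightarrow> s!k = t!k then 1 else 0)"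
proof -
  have ls: "length s = N" "length t = N" using s t by (auto simp: states_def)
  show ?thesis
    using nm ls n m unfolding op_mult_loc_left[OF s n]
    by (cases "t!n") (auto simp: loc_def same_off_upd_other nth_list_update)
qed

definition gcomm :: "nat \<Rightarrow> 'i gm \<Rightarrow> 'j gm \<Rightarrow> bool" where
  "gcomm N X Y \<longleftrightarrow> (\<forall>a b c d. \<forall>s\<in>states N. \<forall>t\<in>states N.
      op_mult N (X a b) (Y c d) s t = op_mult N (Y c d) (X a b) s t)"

lemma gcomm_sym: "gcomm N X Y \<Longrightarrow> gcomm N Y X"
  unfolding gcomm_def by metis

lemma gcomm_loc: "n < N \<Longrightarrow> m < N \<Longrightarrow> n \<noteq> m \<Longrightarrow> gcomm N (loc n x) (loc m y)"
  unfolding gcomm_def by (auto simp: op_mult_loc_loc_diff conj_commute)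

lemma gcomm_gid: "gcomm N X gid"
  unfolding gcomm_def by (simp add: op_mult_gid_left op_mult_gid_right)

lemma gcomm_cong: "geq N B B' \<Longrightarrow> gcomm N X B \<Longrightarrow> gcomm N X B'"
  unfolding gcomm_def
proof (intro allI ballI)
  fix a b c d s t assume e: "geq N B B'" and h: "\<forall>a b c d. \<forall>s\<in>states N. \<forall>t\<in>states N.
      op_mult N (X a b) (B c d) s t = op_mult N (B c d) (X a b) s t" and s: "s \<in> states N" and t: "t \<in> states N"
  have "op_mult N (X a b) (B' c d) s t = op_mult N (X a b) (B c d) s t"
    using e s t unfolding geq_def by (intro op_mult_cong) auto
  also have "\<dots> = op_mult N (B c d) (X a b) s t" using h s t by auto
  also have "\<dots> = op_mult N (B' c d) (X a b) s t"
    using e s t unfolding geq_def by (intro op_mult_cong) auto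
  finally show "op_mult N (X a b) (B' c d) s t = op_mult N (B' c d) (X a b) s t" .
qed

lemma gcomm_mult:
  assumes A: "gcomm N X A" and B: "gcomm N X B"
  shows "gcomm N X (gmult N A B)"
  unfolding gcomm_def
proof (intro allI ballI)
  fix a b c d s t assume s: "s \<in> states N" and t: "t \<in> states N"
  have "op_mult N (X a b) (gmult N A B c d) s t = (\<Sum>j\<in>UNIV. op_mult N (op_mult N (X a b) (A c j)) (B j d) s t)"
    by (simp add: gmult_def op_mult_sum_right op_mult_assoc)
  also have "\<dots> = (\<Sum>j\<in>UNIV. op_mult N (op_mult N (A c j) (X a b)) (B j d) s t)"
    apply (intro sum.cong refl) apply (rule op_mult_cong) using A s t unfolding gcomm_def by auto
  also have "\<dots> = (\<Sum>j\<in>UNIV. op_mult N (A c j) (op_mult N (B j d) (X a b)) s t)"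
    unfolding op_mult_assoc apply (intro sum.cong refl) apply (rule op_mult_cong) using B s t unfolding gcomm_def by auto
  also have "\<dots> = op_mult N (gmult N A B c d) (X a b) s t"
    by (simp add: gmult_def op_mult_sum_left op_mult_assoc)
  finally show "op_mult N (X a b) (gmult N A B c d) s t = op_mult N (gmult N A B c d) (X a b) s t" .
qed

lemma transp_gmult:
  assumes "gcomm N A B"
  shows "geq N (am_transp (gmult N A B)) (gmult N (am_transp B) (am_transp A))"
  using assms unfolding geq_def gcomm_def am_transp_def gmult_def by (auto intro!: sum.cong)


definition T1 :: "amat \<Rightarrow> (bool \<times> bool) gm" where
  "T1 X i j = (if snd i = snd j then X (fst i) (fst j) else (\<lambda>s t. 0))"
definition T2 :: "amat \<Rightarrow> (bool \<times> bool) gm" where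
  "T2 X i j = (if fst i = fst j then X (snd i) (snd j) else (\<lambda>s t. 0))"
definition Rsc :: "complex \<Rightarrow> complex \<Rightarrow> (bool \<times> bool) gm" where
  "Rsc \<eta> z i j s t = Rmat \<eta> z (fst i) (snd i) (fst j) (snd j) * (if s = t then 1 else 0)"

definition RTTg :: "complex \<Rightarrow> nat \<Rightarrow> (complex \<Rightarrow> amat) \<Rightarrow> complex \<Rightarrow> complex \<Rightarrow> bool" where
  "RTTg \<eta> N T l \<mu> \<longleftrightarrow> geq N (gmult N (Rsc \<eta> (l-\<mu>)) (gmult N (T1 (T l)) (T2 (T \<mu>))))
       (gmult N (gmult N (T2 (T \<mu>)) (T1 (T l))) (Rsc \<eta> (l-\<mu>)))"

lemma gmult_apply: "gmult N X Y i k s t = (\<Sum>j\<in>UNIV. op_mult N (X i j) (Y j k) s t)"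
  by (simp add: gmult_def)

lemma UNIV_bool_pair: "(UNIV::(bool\<times>bool) set) = {(False,False),(False,True),(True,False),(True,True)}"
  by auto

lemma sum_pair: "(\<Sum>j\<in>(UNIV::(bool\<times>bool) set). f j) = (\<Sum>e\<in>UNIV. \<Sum>g\<in>UNIV. f (e,g))"
  by (simp add: UNIV_bool_pair UNIV_bool add.assoc)

lemma op_mult_zero_left[simp]: "op_mult N (\<lambda>s t. 0) B s t = 0"
  by (simp add: op_mult_def)
lemma op_mult_zero_right[simp]: "op_mult N A (\<lambda>s t. 0) s t = 0"
  by (simp add: op_mult_def)

lemma if0_mult: "(if P then r else 0) * (x::complex) = (if P then r * x else 0)" by simp
lemma mult_if0: "(x::complex) * (if P then r else 0) = (if P then x * r else 0)" by simp

lemma op_mult_sc_left: "s \<in> states N \<Longrightarrow> op_mult N (\<lambda>s t. r * (if s = t then 1 else 0)) B s t = r * B s t"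
  unfolding op_mult_def by (simp add: mult_if01 if0_mult sum.delta')
lemma op_mult_sc_right: "t \<in> states N \<Longrightarrow> op_mult N A (\<lambda>s t. r * (if s = t then 1 else 0)) s t = A s t * r"
  unfolding op_mult_def by (simp add: mult_if01 mult_if0 sum.delta)

lemma op_mult_Rsc_left: "s \<in> states N \<Longrightarrow> op_mult N (Rsc \<eta> z i j) B s t = Rmat \<eta> z (fst i) (snd i) (fst j) (snd j) * B s t"
  unfolding Rsc_def by (rule op_mult_sc_left)
lemma op_mult_Rsc_right: "t \<in> states N \<Longrightarrow> op_mult N A (Rsc \<eta> z i j) s t = A s t * Rmat \<eta> z (fst i) (snd i) (fst j) (snd j)"
  unfolding Rsc_def by (rule op_mult_sc_right)

lemma gmult_T1_T2: "gmult N (T1 X) (T2 Y) i k = op_mult N (X (fst i) (fst k)) (Y (snd i) (snd k))"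
  unfolding fun_eq_iff gmult_apply
  by (cases i; cases k) (auto simp: UNIV_bool_pair T1_def T2_def)

lemma gmult_T2_T1: "gmult N (T2 Y) (T1 X) i k = op_mult N (Y (snd i) (snd k)) (X (fst i) (fst k))"
  unfolding fun_eq_iff gmult_apply
  by (cases i; cases k) (auto simp: UNIV_bool_pair T1_def T2_def)

lemma gmult_T1_T1: "gmult N (T1 X) (T1 Y) = T1 (gmult N X Y)"
  unfolding fun_eq_iff gmult_apply
  by (auto simp: UNIV_bool_pair T1_def UNIV_bool gmult_apply)

lemma gmult_T2_T2: "gmult N (T2 X) (T2 Y) = T2 (gmult N X Y)"
  unfolding fun_eq_iff gmult_apply
  by (auto simp: UNIV_bool_pair T2_def UNIV_bool gmult_apply)

lemma RTT_of_RTTg: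
  assumes "RTTg \<eta> N T l \<mu>" shows "RTT \<eta> N T l \<mu>"
  unfolding RTT_def
proof (intro allI ballI)
  fix a c b d s t assume s: "s \<in> states N" and t: "t \<in> states N"
  have L: "gmult N (Rsc \<eta> (l-\<mu>)) (gmult N (T1 (T l)) (T2 (T \<mu>))) (a,c) (b,d) s t =
     (\<Sum>e\<in>UNIV. \<Sum>f\<in>UNIV. Rmat \<eta> (l - \<mu>) a c e f * op_mult N (T l e b) (T \<mu> f d) s t)"
    unfolding gmult_apply[of N "Rsc \<eta> (l-\<mu>)"] op_mult_Rsc_left[OF s] gmult_T1_T2 sum_pair by simp
  have R: "gmult N (gmult N (T2 (T \<mu>)) (T1 (T l))) (Rsc \<eta> (l-\<mu>)) (a,c) (b,d) s t =
     (\<Sum>e\<in>UNIV. \<Sum>f\<in>UNIV. op_mult N (T \<mu> c e) (T l a f) s t * Rmat \<eta> (l - \<mu>) f e b d)"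
    unfolding gmult_apply[of N _ "Rsc \<eta> (l-\<mu>)"] op_mult_Rsc_right[OF t] gmult_T2_T1 sum_pair
    by (simp add: UNIV_bool)
  show "(\<Sum>e\<in>UNIV. \<Sum>f\<in>UNIV. Rmat \<eta> (l - \<mu>) a c e f * op_mult N (T l e b) (T \<mu> f d) s t) =
        (\<Sum>e\<in>UNIV. \<Sum>f\<in>UNIV. op_mult N (T \<mu> c e) (T l a f) s t * Rmat \<eta> (l - \<mu>) f e b d)"
    using assms s t unfolding RTTg_def geq_def L[symmetric] R[symmetric] by blast
qed


section \<open>Six-vertex local identities\<close>

lemma E1: fixes l \<mu> xi \<eta> :: complex
  assumes "sinh (l - \<mu> + \<eta>) \<noteq> 0" "sinh (l - xi + \<eta>) \<noteq> 0" "sinh (\<mu> - xi + \<eta>) \<noteq> 0"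
  shows "bfun \<eta> (l - xi) * cfun \<eta> (\<mu> - xi) = cfun \<eta> (l - \<mu>) * bfun \<eta> (\<mu> - xi) * cfun \<eta> (l - xi) + bfun \<eta> (l - \<mu>) * cfun \<eta> (\<mu> - xi)"
  using assms unfolding bfun_def cfun_def
  apply (simp add: field_simps)
  apply (thin_tac _)+
  unfolding sinh_field_def exp_minus exp_add exp_diff
  by (simp add: field_simps, (simp add: algebra_simps power2_eq_square)?)

lemma E2: fixes l \<mu> xi \<eta> :: complex
  assumes "sinh (l - \<mu> + \<eta>) \<noteq> 0" "sinh (l - xi + \<eta>) \<noteq> 0" "sinh (\<mu> - xi + \<eta>) \<noteq> 0"
  shows "cfun \<eta> (l - xi) = bfun \<eta> (l - \<mu>) * bfun \<eta> (\<mu> - xi) * cfun \<eta> (l - xi) + cfun \<eta> (l - \<mu>) * cfun \<eta> (\<mu> - xi)"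
  using assms unfolding bfun_def cfun_def
  apply (simp add: field_simps)
  apply (thin_tac _)+
  unfolding sinh_field_def exp_minus exp_add exp_diff
  by (simp add: field_simps, (simp add: algebra_simps power2_eq_square)?)

lemma E3: fixes l \<mu> xi \<eta> :: complex
  assumes "sinh (l - \<mu> + \<eta>) \<noteq> 0" "sinh (l - xi + \<eta>) \<noteq> 0" "sinh (\<mu> - xi + \<eta>) \<noteq> 0"
  shows "cfun \<eta> (l - \<mu>) * bfun \<eta> (l - xi) = bfun \<eta> (l - \<mu>) * cfun \<eta> (l - xi) * cfun \<eta> (\<mu> - xi) + cfun \<eta> (l - \<mu>) * bfun \<eta> (\<mu> - xi)"
  using assms unfolding bfun_def cfun_def
  apply (simp add: field_simps)
  apply (thin_tac _)+
  unfolding sinh_field_def exp_minus exp_add exp_diff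
  by (simp add: field_simps, (simp add: algebra_simps power2_eq_square)?)

lemma O4: fixes l \<mu> xi \<eta> :: complex
  assumes "sinh (l - \<mu> + \<eta>) \<noteq> 0" "sinh (- l - xi + \<eta>) \<noteq> 0" "sinh (- \<mu> - xi + \<eta>) \<noteq> 0"
  shows "cfun \<eta> (- \<mu> - xi) = cfun \<eta> (l - \<mu>) * cfun \<eta> (- l - xi) + bfun \<eta> (l - \<mu>) * bfun \<eta> (- l - xi) * cfun \<eta> (- \<mu> - xi)"
  using assms unfolding bfun_def cfun_def
  apply (simp add: field_simps)
  apply (thin_tac _)+
  unfolding sinh_field_def exp_minus exp_add exp_diff
  by (simp add: field_simps, (simp add: algebra_simps power2_eq_square)?)

lemma O5: fixes l \<mu> xi \<eta> :: complex
  assumes "sinh (l - \<mu> + \<eta>) \<noteq> 0" "sinh (- l - xi + \<eta>) \<noteq> 0" "sinh (- \<mu> - xi + \<eta>) \<noteq> 0"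
  shows "bfun \<eta> (- \<mu> - xi) * cfun \<eta> (- l - xi) = bfun \<eta> (l - \<mu>) * cfun \<eta> (- l - xi) + cfun \<eta> (l - \<mu>) * bfun \<eta> (- l - xi) * cfun \<eta> (- \<mu> - xi)"
  using assms unfolding bfun_def cfun_def
  apply (simp add: field_simps)
  apply (thin_tac _)+
  unfolding sinh_field_def exp_minus exp_add exp_diff
  by (simp add: field_simps, (simp add: algebra_simps power2_eq_square)?)

lemma O6: fixes l \<mu> xi \<eta> :: complex
  assumes "sinh (l - \<mu> + \<eta>) \<noteq> 0" "sinh (- l - xi + \<eta>) \<noteq> 0" "sinh (- \<mu> - xi + \<eta>) \<noteq> 0"
  shows "bfun \<eta> (l - \<mu>) * cfun \<eta> (- l - xi) * cfun \<eta> (- \<mu> - xi) + cfun \<eta> (l - \<mu>) * bfun \<eta> (- l - xi) = cfun \<eta> (l - \<mu>) * bfun \<eta> (- \<mu> - xi)"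
  using assms unfolding bfun_def cfun_def
  apply (simp add: field_simps)
  apply (thin_tac _)+
  unfolding sinh_field_def exp_minus exp_add exp_diff
  by (simp add: field_simps, (simp add: algebra_simps power2_eq_square)?)


definition Gf :: "complex \<times> complex \<times> complex \<times> complex \<Rightarrow> bool \<Rightarrow> bool \<Rightarrow> bool \<Rightarrow> bool \<Rightarrow> complex" where
  "Gf g a b x y = (case g of (p,q,r,s) \<Rightarrow>
     if a = b \<and> x = y then (if a = x then p else q)
     else if a \<noteq> b \<and> x \<noteq> y then (if a = x then s else r) else 0)"

definition L1 :: "(bool \<Rightarrow> bool \<Rightarrow> bool \<Rightarrow> bool \<Rightarrow> complex) \<Rightarrow> (bool\<times>bool) \<Rightarrow> (bool\<times>bool) \<Rightarrow> bool \<Rightarrow> bool \<Rightarrow> complex" where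
  "L1 x i j p q = (if snd i = snd j then x (fst i) (fst j) p q else 0)"
definition L2 :: "(bool \<Rightarrow> bool \<Rightarrow> bool \<Rightarrow> bool \<Rightarrow> complex) \<Rightarrow> (bool\<times>bool) \<Rightarrow> (bool\<times>bool) \<Rightarrow> bool \<Rightarrow> bool \<Rightarrow> complex" where
  "L2 x i j p q = (if fst i = fst j then x (snd i) (snd j) p q else 0)"
definition RlocG :: "complex \<Rightarrow> complex \<Rightarrow> (bool\<times>bool) \<Rightarrow> (bool\<times>bool) \<Rightarrow> bool \<Rightarrow> bool \<Rightarrow> complex" where
  "RlocG B C i j p q = Gf (1,B,C,0) (fst i) (fst j) (snd i) (snd j) * (if p = q then 1 else 0)"

lemma YBE_Rf:
  assumes "b1*c2 = C*b2*c1 + B*c2" "c1 = B*b2*c1 + C*c2" "C*b1 = B*c1*c2 + C*b2"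
  shows "lmult (RlocG B C) (lmult (L1 (Gf (1,b1,c1,0))) (L2 (Gf (1,b2,c2,0)))) =
         lmult (lmult (L2 (Gf (1,b2,c2,0))) (L1 (Gf (1,b1,c1,0)))) (RlocG B C)"
  unfolding fun_eq_iff
proof (intro allI)
  fix i j :: "bool \<times> bool" and p q :: bool
  obtain a c where i: "i = (a,c)" by (cases i)
  obtain b d where j: "j = (b,d)" by (cases j)
  show "lmult (RlocG B C) (lmult (L1 (Gf (1,b1,c1,0))) (L2 (Gf (1,b2,c2,0)))) i j p q =
         lmult (lmult (L2 (Gf (1,b2,c2,0))) (L1 (Gf (1,b1,c1,0)))) (RlocG B C) i j p q"
    unfolding i j
    by (cases a; cases c; cases b; cases d; cases p; cases q;
        simp add: lmult_def sum_pair UNIV_bool Gf_def L1_def L2_def RlocG_def;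
        (use assms in algebra)?)
qed

lemma YBE_Tf:
  assumes "c2 = C*c1 + B*b1*c2" "b2*c1 = B*c1 + C*b1*c2" "B*c1*c2 + C*b1 = C*b2"
  shows "lmult (RlocG B C) (lmult (L1 (Gf (1,b1,0,c1))) (L2 (Gf (1,b2,0,c2)))) =
         lmult (lmult (L2 (Gf (1,b2,0,c2))) (L1 (Gf (1,b1,0,c1)))) (RlocG B C)"
  unfolding fun_eq_iff
proof (intro allI)
  fix i j :: "bool \<times> bool" and p q :: bool
  obtain a c where i: "i = (a,c)" by (cases i)
  obtain b d where j: "j = (b,d)" by (cases j)
  show "lmult (RlocG B C) (lmult (L1 (Gf (1,b1,0,c1))) (L2 (Gf (1,b2,0,c2)))) i j p q =
         lmult (lmult (L2 (Gf (1,b2,0,c2))) (L1 (Gf (1,b1,0,c1)))) (RlocG B C) i j p q"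
    unfolding i j
    by (cases a; cases c; cases b; cases d; cases p; cases q;
        simp add: lmult_def sum_pair UNIV_bool Gf_def L1_def L2_def RlocG_def;
        (use assms in algebra)?)
qed


lemma T1_loc: "T1 (loc n x) = loc n (L1 x)"
  by (auto simp: fun_eq_iff T1_def L1_def loc_def)
lemma T2_loc: "T2 (loc n x) = loc n (L2 x)"
  by (auto simp: fun_eq_iff T2_def L2_def loc_def)

lemma Rmat_Gf: "Rmat \<eta> z a1 a2 b1 b2 = Gf (1, bfun \<eta> z, cfun \<eta> z, 0) a1 b1 a2 b2"
  by (cases a1; cases a2; cases b1; cases b2; simp add: Rmat_def Gf_def)

lemma same_off_diag:
  assumes "s \<in> states N" "t \<in> states N" "n < N"
  shows "(if s!n = t!n then 1 else 0) * same_off n s t = (if s = t then 1 else (0::complex))"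
  using assms unfolding same_off_def states_def
  by (auto simp: list_eq_iff_nth_eq)

lemma Rsc_loc: "n < N \<Longrightarrow> geq N (Rsc \<eta> z) (loc n (RlocG (bfun \<eta> z) (cfun \<eta> z)))"
  unfolding geq_def Rsc_def loc_def RlocG_def
  by (auto simp: Rmat_Gf mult.assoc same_off_diag)

lemma RTTg_loc:
  assumes n: "n < N"
  and Y: "lmult (RlocG (bfun \<eta> (l-\<mu>)) (cfun \<eta> (l-\<mu>))) (lmult (L1 (x l)) (L2 (x \<mu>))) =
          lmult (lmult (L2 (x \<mu>)) (L1 (x l))) (RlocG (bfun \<eta> (l-\<mu>)) (cfun \<eta> (l-\<mu>)))"
  shows "RTTg \<eta> N (\<lambda>z. loc n (x z)) l \<mu>"
proof -
  let ?R = "RlocG (bfun \<eta> (l-\<mu>)) (cfun \<eta> (l-\<mu>))"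
  have "geq N (gmult N (Rsc \<eta> (l-\<mu>)) (gmult N (loc n (L1 (x l))) (loc n (L2 (x \<mu>)))))
              (gmult N (loc n ?R) (loc n (lmult (L1 (x l)) (L2 (x \<mu>)))))"
    by (intro gmult_cong Rsc_loc gmult_loc_loc n)
  also have "geq N \<dots> (loc n (lmult ?R (lmult (L1 (x l)) (L2 (x \<mu>)))))"
    by (intro gmult_loc_loc n)
  also have "\<dots> = loc n (lmult (lmult (L2 (x \<mu>)) (L1 (x l))) ?R)" using Y by simp
  also have "geq N \<dots> (gmult N (loc n (lmult (L2 (x \<mu>)) (L1 (x l)))) (loc n ?R))"
    by (rule geq_sym, rule gmult_loc_loc, rule n)
  also have "geq N \<dots> (gmult N (gmult N (loc n (L2 (x \<mu>))) (loc n (L1 (x l)))) (Rsc \<eta> (l-\<mu>)))"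
    by (intro gmult_cong, rule geq_sym, rule gmult_loc_loc, rule n, rule geq_sym, rule Rsc_loc, rule n)
  finally show ?thesis unfolding RTTg_def T1_loc T2_loc .
qed

lemma comm_T1_T2: "gcomm N X Y \<Longrightarrow> geq N (gmult N (T1 X) (T2 Y)) (gmult N (T2 Y) (T1 X))"
  unfolding geq_def gcomm_def gmult_T1_T2 gmult_T2_T1 by auto

lemma RTTg_mult:
  assumes P: "RTTg \<eta> N P l \<mu>" and S: "RTTg \<eta> N S l \<mu>"
    and c1: "gcomm N (S l) (P \<mu>)" and c2: "gcomm N (P l) (S \<mu>)"
  shows "RTTg \<eta> N (\<lambda>z. gmult N (P z) (S z)) l \<mu>"
proof -
  let ?A = "T1 (P l)" and ?B = "T1 (S l)" and ?C = "T2 (P \<mu>)" and ?D = "T2 (S \<mu>)" and ?R = "Rsc \<eta> (l-\<mu>)"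
  have "geq N (gmult N ?R (gmult N (gmult N ?A ?B) (gmult N ?C ?D))) (gmult N ?R (gmult N ?A (gmult N (gmult N ?B ?C) ?D)))"
    by (simp only: gmult_assoc geq_refl)
  also have "geq N \<dots> (gmult N ?R (gmult N ?A (gmult N (gmult N ?C ?B) ?D)))"
    by (rule gmult_cong[OF geq_refl], rule gmult_cong[OF geq_refl], rule gmult_cong[OF _ geq_refl], rule comm_T1_T2[OF c1])
  also have "geq N \<dots> (gmult N (gmult N ?R (gmult N ?A ?C)) (gmult N ?B ?D))"
    by (simp only: gmult_assoc geq_refl)
  also have "geq N \<dots> (gmult N (gmult N (gmult N ?C ?A) ?R) (gmult N ?B ?D))"
    using P unfolding RTTg_def by (rule gmult_cong[OF _ geq_refl])
  also have "geq N \<dots> (gmult N (gmult N ?C ?A) (gmult N ?R (gmult N ?B ?D)))"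
    by (simp only: gmult_assoc geq_refl)
  also have "geq N \<dots> (gmult N (gmult N ?C ?A) (gmult N (gmult N ?D ?B) ?R))"
    using S unfolding RTTg_def by (rule gmult_cong[OF geq_refl])
  also have "geq N \<dots> (gmult N ?C (gmult N (gmult N ?A ?D) (gmult N ?B ?R)))"
    by (simp only: gmult_assoc geq_refl)
  also have "geq N \<dots> (gmult N ?C (gmult N (gmult N ?D ?A) (gmult N ?B ?R)))"
    by (rule gmult_cong[OF geq_refl], rule gmult_cong[OF _ geq_refl], rule comm_T1_T2[OF c2])
  also have "geq N \<dots> (gmult N (gmult N (gmult N ?C ?D) (gmult N ?A ?B)) ?R)"
    by (simp only: gmult_assoc geq_refl)
  finally show ?thesis unfolding RTTg_def gmult_T1_T1[symmetric] gmult_T2_T2[symmetric] .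
qed

lemma T1_cong: "geq N X X' \<Longrightarrow> geq N (T1 X) (T1 X')"
  unfolding geq_def T1_def by auto
lemma T2_cong: "geq N X X' \<Longrightarrow> geq N (T2 X) (T2 X')"
  unfolding geq_def T2_def by auto

lemma RTTg_cong:
  assumes "RTTg \<eta> N P l \<mu>" "geq N (P l) (P' l)" "geq N (P \<mu>) (P' \<mu>)"
  shows "RTTg \<eta> N P' l \<mu>"
proof -
  have "geq N (gmult N (Rsc \<eta> (l-\<mu>)) (gmult N (T1 (P' l)) (T2 (P' \<mu>))))
             (gmult N (Rsc \<eta> (l-\<mu>)) (gmult N (T1 (P l)) (T2 (P \<mu>))))"
    by (rule geq_sym, intro gmult_cong geq_refl T1_cong T2_cong assms(2,3))
  also have "geq N \<dots> (gmult N (gmult N (T2 (P \<mu>)) (T1 (P l))) (Rsc \<eta> (l-\<mu>)))"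
    using assms(1) unfolding RTTg_def .
  also have "geq N \<dots> (gmult N (gmult N (T2 (P' \<mu>)) (T1 (P' l))) (Rsc \<eta> (l-\<mu>)))"
    using assms by (intro gmult_cong geq_refl T1_cong T2_cong)
  finally show ?thesis unfolding RTTg_def .
qed

lemma op_mult_scale: "op_mult N (\<lambda>s t. k1 * A s t) (\<lambda>s t. k2 * B s t) s t = k1 * k2 * op_mult N A B s t"
  unfolding op_mult_def by (simp add: sum_distrib_left ac_simps)

lemma RTT_scale:
  assumes "RTT \<eta> N P l \<mu>"
  shows "RTT \<eta> N (\<lambda>z a b s t. k z * P z a b s t) l \<mu>"
  unfolding RTT_def
proof (intro allI ballI)
  fix a c b d s t assume s: "s \<in> states N" and t: "t \<in> states N"
  have H: "(\<Sum>e\<in>UNIV. \<Sum>f\<in>UNIV. Rmat \<eta> (l - \<mu>) a c e f * op_mult N (P l e b) (P \<mu> f d) s t) =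
       (\<Sum>e\<in>UNIV. \<Sum>f\<in>UNIV. op_mult N (P \<mu> c e) (P l a f) s t * Rmat \<eta> (l - \<mu>) f e b d)"
    using assms s t unfolding RTT_def by blast
  have e1: "(\<Sum>e\<in>UNIV. \<Sum>f\<in>UNIV. Rmat \<eta> (l - \<mu>) a c e f *
            op_mult N (\<lambda>s t. k l * P l e b s t) (\<lambda>s t. k \<mu> * P \<mu> f d s t) s t) =
       (k l * k \<mu>) * (\<Sum>e\<in>UNIV. \<Sum>f\<in>UNIV. Rmat \<eta> (l - \<mu>) a c e f * op_mult N (P l e b) (P \<mu> f d) s t)"
    by (simp add: op_mult_scale sum_distrib_left ac_simps)
  have e2: "(\<Sum>e\<in>UNIV. \<Sum>f\<in>UNIV. op_mult N (\<lambda>s t. k \<mu> * P \<mu> c e s t) (\<lambda>s t. k l * P l a f s t) s t *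
            Rmat \<eta> (l - \<mu>) f e b d) =
       (k l * k \<mu>) * (\<Sum>e\<in>UNIV. \<Sum>f\<in>UNIV. op_mult N (P \<mu> c e) (P l a f) s t * Rmat \<eta> (l - \<mu>) f e b d)"
    by (simp add: op_mult_scale sum_distrib_left ac_simps)
  show "(\<Sum>e\<in>UNIV. \<Sum>f\<in>UNIV. Rmat \<eta> (l - \<mu>) a c e f *
            op_mult N (\<lambda>s t. k l * P l e b s t) (\<lambda>s t. k \<mu> * P \<mu> f d s t) s t) =
        (\<Sum>e\<in>UNIV. \<Sum>f\<in>UNIV. op_mult N (\<lambda>s t. k \<mu> * P \<mu> c e s t) (\<lambda>s t. k l * P l a f s t) s t *
            Rmat \<eta> (l - \<mu>) f e b d)"
    unfolding e1 e2 H ..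
qed




section \<open>Structure of the transposed QTM monodromy\<close>

definition sx :: "complex \<Rightarrow> real \<Rightarrow> nat \<Rightarrow> complex \<Rightarrow> nat \<Rightarrow> bool \<Rightarrow> bool \<Rightarrow> bool \<Rightarrow> bool \<Rightarrow> complex" where
  "sx \<eta> \<beta> N l m = (if even m then (\<lambda>a b p q. Rmat \<eta> (- bN \<beta> N - l) p b q a)
                       else (\<lambda>a b p q. Rmat \<eta> (l - bN \<beta> N) a p b q))"

lemma qtm_site_loc: "qtm_site \<eta> \<beta> N m l = loc (m-1) (sx \<eta> \<beta> N l m)"
  by (auto simp: fun_eq_iff qtm_site_def sx_def Ltil_def Lop_def loc_def)

definition gtup :: "complex \<Rightarrow> real \<Rightarrow> nat \<Rightarrow> complex \<Rightarrow> nat \<Rightarrow> complex \<times> complex \<times> complex \<times> complex" where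
  "gtup \<eta> \<beta> N z m = (if even m then (1, bfun \<eta> (z - bN \<beta> N), cfun \<eta> (z - bN \<beta> N), 0)
                      else (1, bfun \<eta> (- z - bN \<beta> N), 0, cfun \<eta> (- z - bN \<beta> N)))"

lemma transp_loc: "am_transp (loc n x) = loc n (\<lambda>a b p q. x b a p q)"
  by (simp add: fun_eq_iff am_transp_def loc_def)

lemma transp_site: "am_transp (loc n (sx \<eta> \<beta> N (-z) m)) = loc n (Gf (gtup \<eta> \<beta> N z m))"
proof -
  have "(\<lambda>a b p q. sx \<eta> \<beta> N (-z) m b a p q) = Gf (gtup \<eta> \<beta> N z m)"
  proof (intro ext)
    fix a b p q
    show "sx \<eta> \<beta> N (-z) m b a p q = Gf (gtup \<eta> \<beta> N z m) a b p q"
      by (cases "even m"; cases a; cases b; cases p; cases q; simp add: sx_def gtup_def Rmat_def Gf_def)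
  qed
  thus ?thesis by (simp add: transp_loc)
qed

fun AP :: "nat \<Rightarrow> (nat \<Rightarrow> complex \<times> complex \<times> complex \<times> complex) \<Rightarrow> nat \<Rightarrow> amat" where
  "AP N g 0 = gid"
| "AP N g (Suc m) = gmult N (AP N g m) (loc m (Gf (g (Suc m))))"

fun AQ :: "nat \<Rightarrow> (nat \<Rightarrow> complex \<times> complex \<times> complex \<times> complex) \<Rightarrow> nat \<Rightarrow> amat" where
  "AQ N g 0 = gid"
| "AQ N g (Suc m) = gmult N (loc m (Gf (g (Suc m)))) (AQ N g m)"

lemma gcomm_loc_AP: "m \<le> n \<Longrightarrow> n < N \<Longrightarrow> gcomm N (loc n x) (AP N g m)"
  by (induction m) (auto intro!: gcomm_mult gcomm_loc simp: gcomm_gid)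

lemma gcomm_loc_AQ: "m \<le> n \<Longrightarrow> n < N \<Longrightarrow> gcomm N (loc n x) (AQ N g m)"
  by (induction m) (auto intro!: gcomm_mult gcomm_loc simp: gcomm_gid)

lemma gcomm_loc_qtm: "m \<le> n \<Longrightarrow> n < N \<Longrightarrow> gcomm N (loc n x) (qtm_prod \<eta> \<beta> N m l)"
  by (induction m) (auto intro!: gcomm_mult gcomm_loc simp: gcomm_gid am_id_gid am_mult_gmult qtm_site_loc)

lemma transp_cong: "geq N X Y \<Longrightarrow> geq N (am_transp X) (am_transp Y)"
  unfolding geq_def am_transp_def by auto

lemma transp_qtm: "m \<le> N \<Longrightarrow> geq N (am_transp (qtm_prod \<eta> \<beta> N m (-z))) (AP N (gtup \<eta> \<beta> N z) m)"
proof (induction m)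
  case 0
  show ?case by (simp add: am_id_gid geq_def am_transp_def gid_def)
next
  case (Suc m)
  have m: "m < N" using Suc.prems by simp
  have "geq N (am_transp (qtm_prod \<eta> \<beta> N (Suc m) (-z)))
        (am_transp (gmult N (loc m (sx \<eta> \<beta> N (-z) (Suc m))) (qtm_prod \<eta> \<beta> N m (-z))))"
    by (simp add: am_mult_gmult qtm_site_loc)
  also have "geq N \<dots> (gmult N (am_transp (qtm_prod \<eta> \<beta> N m (-z))) (am_transp (loc m (sx \<eta> \<beta> N (-z) (Suc m)))))"
    by (rule transp_gmult, rule gcomm_loc_qtm) (use m in auto)
  also have "geq N \<dots> (AP N (gtup \<eta> \<beta> N z) (Suc m))"
    unfolding transp_site AP.simps using Suc m by (intro gmult_cong geq_refl) auto
  finally show ?case .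
qed


section \<open>Yang-Baxter relation for T plus\<close>

lemma RTTg_site:
  assumes m: "m < N"
    and c0: "sinh (l - \<mu> + \<eta>) \<noteq> 0"
    and ce: "sinh (l - bN \<beta> N + \<eta>) \<noteq> 0" "sinh (\<mu> - bN \<beta> N + \<eta>) \<noteq> 0"
    and co: "sinh (- l - bN \<beta> N + \<eta>) \<noteq> 0" "sinh (- \<mu> - bN \<beta> N + \<eta>) \<noteq> 0"
  shows "RTTg \<eta> N (\<lambda>z. loc m (Gf (gtup \<eta> \<beta> N z (Suc m)))) l \<mu>"
proof (rule RTTg_loc[OF m])
  show "lmult (RlocG (bfun \<eta> (l - \<mu>)) (cfun \<eta> (l - \<mu>)))
     (lmult (L1 (Gf (gtup \<eta> \<beta> N l (Suc m)))) (L2 (Gf (gtup \<eta> \<beta> N \<mu> (Suc m))))) =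
    lmult (lmult (L2 (Gf (gtup \<eta> \<beta> N \<mu> (Suc m)))) (L1 (Gf (gtup \<eta> \<beta> N l (Suc m)))))
     (RlocG (bfun \<eta> (l - \<mu>)) (cfun \<eta> (l - \<mu>)))"
  proof (cases "even (Suc m)")
    case True
    show ?thesis unfolding gtup_def using True
      by (simp, intro YBE_Rf E1 E2 E3 c0 ce)
  next
    case False
    show ?thesis unfolding gtup_def using False
      by (simp, intro YBE_Tf O4 O5 O6 c0 co)
  qed
qed

lemma RTTg_AP:
  assumes "m \<le> N"
    and c0: "sinh (l - \<mu> + \<eta>) \<noteq> 0"
    and ce: "sinh (l - bN \<beta> N + \<eta>) \<noteq> 0" "sinh (\<mu> - bN \<beta> N + \<eta>) \<noteq> 0"
    and co: "sinh (- l - bN \<beta> N + \<eta>) \<noteq> 0" "sinh (- \<mu> - bN \<beta> N + \<eta>) \<noteq> 0"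
  shows "RTTg \<eta> N (\<lambda>z. AP N (gtup \<eta> \<beta> N z) m) l \<mu>"
  using assms(1)
proof (induction m)
  case 0
  show ?case unfolding RTTg_def AP.simps
  proof -
    have T1g: "T1 (gid::amat) = gid" and T2g: "T2 (gid::amat) = gid"
      by (auto simp: fun_eq_iff T1_def T2_def gid_def prod_eq_iff)
    have "geq N (gmult N (Rsc \<eta> (l - \<mu>)) (gmult N gid gid)) (gmult N (Rsc \<eta> (l - \<mu>)) gid)"
      by (rule gmult_cong[OF geq_refl gmult_id_left])
    also have "geq N \<dots> (Rsc \<eta> (l - \<mu>))" by (rule gmult_id_right)
    also have "geq N \<dots> (gmult N gid (Rsc \<eta> (l - \<mu>)))" by (rule geq_sym, rule gmult_id_left)
    also have "geq N \<dots> (gmult N (gmult N gid gid) (Rsc \<eta> (l - \<mu>)))"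
      by (rule gmult_cong[OF _ geq_refl], rule geq_sym, rule gmult_id_left)
    finally show "geq N (gmult N (Rsc \<eta> (l - \<mu>)) (gmult N (T1 gid) (T2 gid)))
        (gmult N (gmult N (T2 gid) (T1 gid)) (Rsc \<eta> (l - \<mu>)))" unfolding T1g T2g .
  qed
next
  case (Suc m)
  have m: "m < N" using Suc.prems by simp
  show ?case unfolding AP.simps
    by (rule RTTg_mult[where P="\<lambda>z. AP N (gtup \<eta> \<beta> N z) m" and S="\<lambda>z. loc m (Gf (gtup \<eta> \<beta> N z (Suc m)))"])
       (use Suc m in \<open>auto intro: RTTg_site[OF m c0 ce co] gcomm_loc_AP gcomm_sym\<close>)
qed

lemma Tplus_eq: "Tplus \<eta> \<beta> N = (\<lambda>z a b s t. inverse (afun \<eta> \<beta> N (-z)) * am_transp (TQTM \<eta> \<beta> N (-z)) a b s t)"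
  by (simp add: fun_eq_iff Tplus_def TQTMt_def am_transp_def divide_inverse mult.commute)

lemma RTT_Tplus:
  assumes "0 < N"
    and c0: "sinh (l - \<mu> + \<eta>) \<noteq> 0"
    and ce: "sinh (l - bN \<beta> N + \<eta>) \<noteq> 0" "sinh (\<mu> - bN \<beta> N + \<eta>) \<noteq> 0"
    and co: "sinh (- l - bN \<beta> N + \<eta>) \<noteq> 0" "sinh (- \<mu> - bN \<beta> N + \<eta>) \<noteq> 0"
  shows "RTT \<eta> N (Tplus \<eta> \<beta> N) l \<mu>"
proof -
  have "RTTg \<eta> N (\<lambda>z. am_transp (TQTM \<eta> \<beta> N (-z))) l \<mu>"
    by (rule RTTg_cong[OF RTTg_AP[OF le_refl c0 ce co]])
       (unfold TQTM_def, (rule geq_sym, rule transp_qtm, rule le_refl)+)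
  hence "RTT \<eta> N (\<lambda>z. am_transp (TQTM \<eta> \<beta> N (-z))) l \<mu>" by (rule RTT_of_RTTg)
  thus ?thesis unfolding Tplus_eq by (rule RTT_scale)
qed



section \<open>Four-parameter local matrices\<close>

type_synonym c4 = "complex \<times> complex \<times> complex \<times> complex"

definition gprod :: "c4 \<Rightarrow> c4 \<Rightarrow> c4" where
  "gprod g h = (case g of (p,q,r,s) \<Rightarrow> case h of (p',q',r',s') \<Rightarrow>
      (p*p'+s*s', q*q'+r*r', q*r'+r*q', p*s'+s*p'))"
definition ginv :: "c4 \<Rightarrow> c4" where
  "ginv g = (case g of (p,q,r,s) \<Rightarrow> (p/(p^2-s^2), q/(q^2-r^2), -r/(q^2-r^2), -s/(p^2-s^2)))"
definition gtr :: "c4 \<Rightarrow> c4" where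
  "gtr g = (case g of (p,q,r,s) \<Rightarrow> (p,q,s,r))"
definition gsm :: "complex \<Rightarrow> c4 \<Rightarrow> c4" where
  "gsm c g = (case g of (p,q,r,s) \<Rightarrow> (c*p,c*q,c*r,c*s))"
definition ginvertible :: "c4 \<Rightarrow> bool" where
  "ginvertible g = (case g of (p,q,r,s) \<Rightarrow> p^2-s^2 \<noteq> 0 \<and> q^2-r^2 \<noteq> 0)"
definition anti :: "c4 \<Rightarrow> c4" where
  "anti g = gtr (ginv g)"
definition gone :: c4 where "gone = (1,1,0,0)"

lemma gprod_ginv:
  assumes "ginvertible g" shows "gprod g (ginv g) = gone \<and> gprod (ginv g) g = gone"
proof -
  obtain p q r s where g: "g = (p,q,r,s)" by (cases g)
  have d1: "p*p - s*s \<noteq> 0" and d2: "q*q - r*r \<noteq> 0"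
    using assms by (auto simp: g ginvertible_def power2_eq_square)
  have aux: "x * (x / D) + y * (- y / D) = (x*x - y*y) / D" for x y D :: complex
    by (simp add: diff_divide_distrib)
  have aux2: "x * (- y / D) + y * (x / D) = 0" for x y D :: complex
    by (simp add: algebra_simps)
  have e1: "p * (p / (p*p - s*s)) + s * (- s / (p*p - s*s)) = 1" using d1 by (simp only: aux) simp
  have e2: "q * (q / (q*q - r*r)) + r * (- r / (q*q - r*r)) = 1" using d2 by (simp only: aux) simp
  have e3: "q * (- r / (q*q - r*r)) + r * (q / (q*q - r*r)) = 0" by (rule aux2)
  have e4: "p * (- s / (p*p - s*s)) + s * (p / (p*p - s*s)) = 0" by (rule aux2)
  show ?thesis using e1 e2 e3 e4
    by (simp add: g gprod_def ginv_def gone_def power2_eq_square algebra_simps)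
qed

lemma gprod_assoc: "gprod (gprod a b) c = gprod a (gprod b c)"
  by (cases a; cases b; cases c) (simp add: gprod_def algebra_simps)

lemma gprod_one_left: "gprod gone h = h" and gprod_one_right: "gprod h gone = h"
  by (cases h; simp add: gprod_def gone_def)+

lemma ginv_unique:
  assumes "ginvertible g" "gprod g h = gone" shows "ginv g = h"
proof -
  have "h = gprod (gprod (ginv g) g) h" using gprod_ginv[OF assms(1)] by (simp add: gprod_one_left)
  also have "\<dots> = ginv g" by (simp add: gprod_assoc assms(2) gprod_one_right)
  finally show ?thesis by simp
qed

lemma ginvertible_right_inv:
  assumes "gprod g h = gone" shows "ginvertible g"
proof -
  obtain p q r s where g: "g = (p,q,r,s)" by (cases g)
  obtain p' q' r' s' where h: "h = (p',q',r',s')" by (cases h)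
  have e: "p*p'+s*s' = 1" "q*q'+r*r' = 1" "q*r'+r*q' = 0" "p*s'+s*p' = 0"
    using assms by (auto simp: g h gprod_def gone_def)
  have "(p^2-s^2)*(p'^2-s'^2) = 1"
  proof -
    have "(p^2-s^2)*(p'^2-s'^2) = (p*p'+s*s')^2 - (p*s'+s*p')^2" by (simp add: algebra_simps power2_eq_square)
    thus ?thesis using e by simp
  qed
  moreover have "(q^2-r^2)*(q'^2-r'^2) = 1"
  proof -
    have "(q^2-r^2)*(q'^2-r'^2) = (q*q'+r*r')^2 - (q*r'+r*q')^2" by (simp add: algebra_simps power2_eq_square)
    thus ?thesis using e by simp
  qed
  ultimately show ?thesis by (auto simp: ginvertible_def g)
qed

lemma gtr_gtr[simp]: "gtr (gtr h) = h"
  by (cases h) (simp add: gtr_def)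

lemma anti_eq:
  assumes "gprod g (gtr h) = gone" shows "anti g = h" "ginvertible g"
proof -
  show gi: "ginvertible g" by (rule ginvertible_right_inv[OF assms])
  show "anti g = h" unfolding anti_def using ginv_unique[OF gi assms] by simp
qed

lemma lmult_Gf: "lmult (Gf g) (Gf h) = Gf (gprod g h)"
proof (intro ext)
  fix a b p q
  obtain g1 g2 g3 g4 where g: "g = (g1,g2,g3,g4)" by (cases g)
  obtain h1 h2 h3 h4 where h: "h = (h1,h2,h3,h4)" by (cases h)
  show "lmult (Gf g) (Gf h) a b p q = Gf (gprod g h) a b p q"
    unfolding g h
    by (cases a; cases b; cases p; cases q; simp add: lmult_def Gf_def gprod_def UNIV_bool algebra_simps)
qed

lemma loc_gone: "n < N \<Longrightarrow> geq N (loc n (Gf gone)) gid"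
  unfolding geq_def
proof (intro allI ballI)
  fix i j s t assume n: "n < N" and s: "s \<in> states N" and t: "t \<in> states N"
  have "loc n (Gf gone) i j s t = (if i = j then 1 else 0) * ((if s!n = t!n then 1 else 0) * same_off n s t)"
    unfolding loc_def by (cases i; cases j; cases "s!n"; cases "t!n"; simp add: Gf_def gone_def)
  also have "\<dots> = gid i j s t" unfolding same_off_diag[OF s t n] by (simp add: gid_def)
  finally show "loc n (Gf gone) i j s t = gid i j s t" .
qed

lemma transp_loc_Gf: "am_transp (loc n (Gf g)) = loc n (Gf (gtr g))"
proof -
  have "(\<lambda>a b p q. Gf g b a p q) = Gf (gtr g)"
  proof (intro ext)
    fix a b p q
    obtain g1 g2 g3 g4 where g: "g = (g1,g2,g3,g4)" by (cases g)
    show "Gf g b a p q = Gf (gtr g) a b p q"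
      unfolding g by (cases a; cases b; cases p; cases q; simp add: Gf_def gtr_def)
  qed
  thus ?thesis by (simp add: transp_loc)
qed

lemma gsc_loc_Gf: "gsc c (loc n (Gf g)) = loc n (Gf (gsm c g))"
proof -
  obtain g1 g2 g3 g4 where g: "g = (g1,g2,g3,g4)" by (cases g)
  show ?thesis unfolding g
    by (auto simp: fun_eq_iff gsc_def loc_def Gf_def gsm_def)
qed


lemma AP_AQ_inv:
  assumes "m \<le> N" "\<forall>i. 1 \<le> i \<and> i \<le> m \<longrightarrow> ginvertible (g i)"
  shows "geq N (gmult N (AP N g m) (AQ N (\<lambda>i. ginv (g i)) m)) gid \<and>
         geq N (gmult N (AQ N (\<lambda>i. ginv (g i)) m) (AP N g m)) gid"
  using assms
proof (induction m)
  case 0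
  show ?case by (simp add: gmult_id_left)
next
  case (Suc m)
  have m: "m < N" using Suc.prems by simp
  have gi: "ginvertible (g (Suc m))" using Suc.prems by auto
  have IH: "geq N (gmult N (AP N g m) (AQ N (\<lambda>i. ginv (g i)) m)) gid"
           "geq N (gmult N (AQ N (\<lambda>i. ginv (g i)) m) (AP N g m)) gid"
    using Suc by auto
  let ?L = "loc m (Gf (g (Suc m)))" and ?L' = "loc m (Gf (ginv (g (Suc m))))"
  let ?P = "AP N g m" and ?Q = "AQ N (\<lambda>i. ginv (g i)) m"
  have LL': "geq N (gmult N ?L ?L') gid"
  proof -
    have "geq N (gmult N ?L ?L') (loc m (lmult (Gf (g (Suc m))) (Gf (ginv (g (Suc m))))))"
      by (rule gmult_loc_loc[OF m])
    also have "geq N \<dots> gid" unfolding lmult_Gf using gprod_ginv[OF gi] loc_gone[OF m] by simp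
    finally show ?thesis .
  qed
  have L'L: "geq N (gmult N ?L' ?L) gid"
  proof -
    have "geq N (gmult N ?L' ?L) (loc m (lmult (Gf (ginv (g (Suc m)))) (Gf (g (Suc m)))))"
      by (rule gmult_loc_loc[OF m])
    also have "geq N \<dots> gid" unfolding lmult_Gf using gprod_ginv[OF gi] loc_gone[OF m] by simp
    finally show ?thesis .
  qed
  have A: "geq N (gmult N (gmult N ?P ?L) (gmult N ?L' ?Q)) gid"
  proof -
    have "geq N (gmult N (gmult N ?P ?L) (gmult N ?L' ?Q)) (gmult N ?P (gmult N (gmult N ?L ?L') ?Q))"
      by (simp only: gmult_assoc geq_refl)
    also have "geq N \<dots> (gmult N ?P (gmult N gid ?Q))"
      by (rule gmult_cong[OF geq_refl], rule gmult_cong[OF LL' geq_refl])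
    also have "geq N \<dots> (gmult N ?P ?Q)"
      by (rule gmult_cong[OF geq_refl gmult_id_left])
    also have "geq N \<dots> gid" by (rule IH(1))
    finally show ?thesis .
  qed
  have B: "geq N (gmult N (gmult N ?L' ?Q) (gmult N ?P ?L)) gid"
  proof -
    have "geq N (gmult N (gmult N ?L' ?Q) (gmult N ?P ?L)) (gmult N ?L' (gmult N (gmult N ?Q ?P) ?L))"
      by (simp only: gmult_assoc geq_refl)
    also have "geq N \<dots> (gmult N ?L' (gmult N gid ?L))"
      by (rule gmult_cong[OF geq_refl], rule gmult_cong[OF IH(2) geq_refl])
    also have "geq N \<dots> (gmult N ?L' ?L)"
      by (rule gmult_cong[OF geq_refl gmult_id_left])
    also have "geq N \<dots> gid" by (rule L'L)
    finally show ?thesis .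
  qed
  show ?case using A B by simp
qed

lemma transp_AQ: "m \<le> N \<Longrightarrow> geq N (am_transp (AQ N h m)) (AP N (\<lambda>i. gtr (h i)) m)"
proof (induction m)
  case 0
  show ?case by (simp add: geq_def am_transp_def gid_def)
next
  case (Suc m)
  have m: "m < N" using Suc.prems by simp
  have "geq N (am_transp (AQ N h (Suc m))) (gmult N (am_transp (AQ N h m)) (am_transp (loc m (Gf (h (Suc m))))))"
    unfolding AQ.simps by (rule transp_gmult, rule gcomm_loc_AQ) (use m in auto)
  also have "geq N \<dots> (AP N (\<lambda>i. gtr (h i)) (Suc m))"
    unfolding transp_loc_Gf AP.simps using Suc m by (intro gmult_cong geq_refl) auto
  finally show ?case .
qed

lemma is_inverse_cong:
  assumes "am_is_inverse N X Y" "geq N X X'" "geq N Y Y'"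
  shows "am_is_inverse N X' Y'"
proof -
  have X: "geq N X' X" and Y: "geq N Y' Y" using assms(2,3) by (auto simp: geq_sym)
  have 1: "geq N (gmult N X Y) gid" "geq N (gmult N Y X) gid"
    using assms(1) unfolding am_is_inverse_def am_eq_geq am_mult_gmult am_id_gid by auto
  have "geq N (gmult N X' Y') gid" by (rule geq_trans[OF gmult_cong[OF X Y] 1(1)])
  moreover have "geq N (gmult N Y' X') gid" by (rule geq_trans[OF gmult_cong[OF Y X] 1(2)])
  ultimately show ?thesis unfolding am_is_inverse_def am_eq_geq am_mult_gmult am_id_gid by simp
qed

lemma inv_unique:
  assumes "am_is_inverse N X Y" shows "geq N (am_inv N X) Y"
proof -
  have "am_is_inverse N X (am_inv N X)" using someI[of "am_is_inverse N X" Y, OF assms] unfolding am_inv_def .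
  hence h1: "geq N (gmult N (am_inv N X) X) gid" unfolding am_is_inverse_def am_eq_geq am_mult_gmult am_id_gid by simp
  have h2: "geq N (gmult N X Y) gid" using assms unfolding am_is_inverse_def am_eq_geq am_mult_gmult am_id_gid by simp
  have "geq N (am_inv N X) (gmult N (am_inv N X) gid)" by (rule geq_sym, rule gmult_id_right)
  also have "geq N \<dots> (gmult N (am_inv N X) (gmult N X Y))" by (rule gmult_cong[OF geq_refl], rule geq_sym, rule h2)
  also have "geq N \<dots> (gmult N (gmult N (am_inv N X) X) Y)" by (simp only: gmult_assoc geq_refl)
  also have "geq N \<dots> (gmult N gid Y)" by (rule gmult_cong[OF h1 geq_refl])
  also have "geq N \<dots> Y" by (rule gmult_id_left)
  finally show ?thesis .
qed

lemma gsc_app: "gsc c X i j = (\<lambda>s t. c * X i j s t)" by (simp add: fun_eq_iff gsc_def)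

lemma gmult_gsc: "gmult N (gsc c X) (gsc d Y) = gsc (c*d) (gmult N X Y)"
  by (simp add: fun_eq_iff gmult_def gsc_app op_mult_scale sum_distrib_left)

lemma gsc_cong: "geq N X Y \<Longrightarrow> geq N (gsc c X) (gsc c Y)"
  unfolding geq_def gsc_def by auto

lemma gsc_gsc: "gsc c (gsc d X) = gsc (c*d) X"
  by (simp add: fun_eq_iff gsc_def)

lemma transp_gsc: "am_transp (gsc c X) = gsc c (am_transp X)"
  by (simp add: fun_eq_iff gsc_def am_transp_def)

lemma gsc_one: "gsc 1 X = X" by (simp add: fun_eq_iff gsc_def)

lemma gsc_gid_geq: "geq N (gmult N (gsc c X) (gsc (inverse c) Y)) gid \<Longrightarrow> c \<noteq> 0 \<Longrightarrow> True" by simp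

lemma antipode_AP:
  assumes c: "c \<noteq> 0" and gi: "\<forall>i. 1 \<le> i \<and> i \<le> N \<longrightarrow> ginvertible (g i)"
    and X: "geq N X (gsc c (AP N g N))"
  shows "am_invertible N X \<and> geq N (antipode N X) (gsc (inverse c) (AP N (\<lambda>i. anti (g i)) N))"
proof -
  let ?Y = "gsc (inverse c) (AQ N (\<lambda>i. ginv (g i)) N)"
  have inv: "geq N (gmult N (AP N g N) (AQ N (\<lambda>i. ginv (g i)) N)) gid \<and>
         geq N (gmult N (AQ N (\<lambda>i. ginv (g i)) N) (AP N g N)) gid"
    by (rule AP_AQ_inv[OF le_refl gi])
  have "am_is_inverse N (gsc c (AP N g N)) ?Y"
    unfolding am_is_inverse_def am_eq_geq am_mult_gmult am_id_gid gmult_gsc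
    using inv c by (simp add: gsc_one)
  hence isi: "am_is_inverse N X ?Y" by (rule is_inverse_cong) (rule geq_sym, rule X, rule geq_refl)
  have "geq N (antipode N X) (am_transp ?Y)"
    unfolding antipode_def by (rule transp_cong, rule inv_unique[OF isi])
  also have "geq N \<dots> (gsc (inverse c) (AP N (\<lambda>i. gtr (ginv (g i))) N))"
    unfolding transp_gsc by (rule gsc_cong, rule transp_AQ, rule le_refl)
  finally show ?thesis using isi unfolding am_invertible_def anti_def by auto
qed

lemma AP_scale: "m \<le> N \<Longrightarrow> geq N (AP N (\<lambda>i. gsm (d i) (h i)) m) (gsc (\<Prod>i\<in>{1..m}. d i) (AP N h m))"
proof (induction m)
  case 0
  show ?case by (simp add: gsc_one)
next
  case (Suc m)
  have "geq N (AP N (\<lambda>i. gsm (d i) (h i)) (Suc m)) (gmult N (gsc (\<Prod>i\<in>{1..m}. d i) (AP N h m)) (gsc (d (Suc m)) (loc m (Gf (h (Suc m))))))"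
    unfolding AP.simps gsc_loc_Gf using Suc by (intro gmult_cong geq_refl) auto
  also have "geq N \<dots> (gsc (\<Prod>i\<in>{1..Suc m}. d i) (AP N h (Suc m)))"
    unfolding gmult_gsc AP.simps by (simp add: prod.cl_ivl_Suc mult.commute)
  finally show ?case .
qed

section \<open>Crossing identities\<close>

lemma exp2: "exp (x * 2) = exp x * exp (x::complex)"
  by (metis exp_add mult_2_right)
lemma exp3: "exp (x * 3) = exp x * exp x * exp (x::complex)"
proof -
  have "x * 3 = x + x + x" by simp
  hence "exp (x * 3) = exp (x + x + x)" by (rule arg_cong)
  also have "\<dots> = exp x * exp x * exp x" by (simp only: exp_add)
  finally show ?thesis .
qed

lemma odd_g: fixes w \<eta> :: complex
  assumes "sinh w \<noteq> 0" "sinh (w + \<eta>) \<noteq> 0" "sinh (w + 2*\<eta>) \<noteq> 0"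
  shows "gprod (1, bfun \<eta> w, 0, cfun \<eta> w)
     (gtr (sinh(w+\<eta>)^2/(sinh w * sinh(w+2*\<eta>)), sinh(w+\<eta>)/sinh w, - sinh \<eta> * sinh(w+\<eta>)/(sinh w * sinh(w+2*\<eta>)), 0)) = gone"
  using assms unfolding bfun_def cfun_def gprod_def gtr_def gone_def
  apply (simp add: field_simps)
  apply (thin_tac _)+
  unfolding sinh_field_def exp_minus exp_add exp_diff mult_2
  by (simp add: field_simps exp2 exp3, (simp add: algebra_simps power2_eq_square)?)

lemma odd_h: fixes w \<eta> :: complex
  assumes "sinh w \<noteq> 0" "sinh (w + \<eta>) \<noteq> 0" "sinh (w + 2*\<eta>) \<noteq> 0" "sinh (w + 2*\<eta> + \<eta>) \<noteq> 0"
  shows "gprod (sinh(w+\<eta>)^2/(sinh w * sinh(w+2*\<eta>)), sinh(w+\<eta>)/sinh w, - sinh \<eta> * sinh(w+\<eta>)/(sinh w * sinh(w+2*\<eta>)), 0)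
     (gtr (gsm (sinh w * sinh (w+2*\<eta>) / sinh (w+\<eta>)^2) (1, bfun \<eta> (w+2*\<eta>), 0, cfun \<eta> (w+2*\<eta>)))) = gone"
  using assms unfolding bfun_def cfun_def gprod_def gtr_def gone_def gsm_def
  apply (simp add: field_simps)
  apply (thin_tac _)+
  unfolding sinh_field_def exp_minus exp_add exp_diff mult_2
  by (simp add: field_simps exp2 exp3, (simp add: algebra_simps power2_eq_square)?)

lemma even_g: fixes v \<eta> :: complex
  assumes "sinh (v + \<eta>) \<noteq> 0" "sinh (v - \<eta>) \<noteq> 0"
  shows "gprod (1, bfun \<eta> v, cfun \<eta> v, 0) (gtr (1, sinh v / sinh (v-\<eta>), 0, - sinh \<eta> / sinh (v-\<eta>))) = gone"
  using assms unfolding bfun_def cfun_def gprod_def gtr_def gone_def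
  apply (simp add: field_simps)
  apply (thin_tac _)+
  unfolding sinh_field_def exp_minus exp_add exp_diff mult_2
  by (simp add: field_simps exp2 exp3, (simp add: algebra_simps power2_eq_square)?)

lemma even_h: fixes v \<eta> :: complex
  assumes "sinh v \<noteq> 0" "sinh (v - \<eta>) \<noteq> 0" "sinh (v - 2*\<eta>) \<noteq> 0" "sinh (v - 2*\<eta> + \<eta>) \<noteq> 0"
  shows "gprod (1, sinh v / sinh (v-\<eta>), 0, - sinh \<eta> / sinh (v-\<eta>))
     (gtr (gsm (sinh (v-\<eta>)^2 / (sinh v * sinh (v-2*\<eta>))) (1, bfun \<eta> (v-2*\<eta>), cfun \<eta> (v-2*\<eta>), 0))) = gone"
  using assms unfolding bfun_def cfun_def gprod_def gtr_def gone_def gsm_def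
  apply (simp add: field_simps power2_eq_square)
  apply (thin_tac _)+
  unfolding sinh_field_def exp_minus exp_add exp_diff mult_2
  by (simp add: field_simps exp2 exp3 power2_eq_square, (simp add: algebra_simps power2_eq_square)?)

lemma delta_base: fixes l xi \<eta> :: complex
  assumes "sinh (l - xi) \<noteq> 0" "sinh (l - xi + \<eta>) \<noteq> 0" "sinh (l - xi - \<eta>) \<noteq> 0" "sinh (l - xi - 2*\<eta>) \<noteq> 0"
    "sinh (-l - xi) \<noteq> 0" "sinh (-l - xi + \<eta>) \<noteq> 0" "sinh (-l - xi + 2*\<eta>) \<noteq> 0"
    "sinh (-l + xi) \<noteq> 0" "sinh (-l + xi + \<eta>) \<noteq> 0" "sinh (-l + xi - \<eta> + \<eta>) \<noteq> 0"
    "sinh (-l - xi + \<eta> + \<eta>) \<noteq> 0" "sinh (l - 2*\<eta> - xi) \<noteq> 0" "sinh (l - 2*\<eta> - xi + \<eta>) \<noteq> 0"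
  shows "inverse (bfun \<eta> (l - xi)) * (sinh (l-xi-\<eta>)^2 / (sinh (l-xi) * sinh (l-xi-2*\<eta>))) *
          (sinh (-l-xi) * sinh (-l-xi+2*\<eta>) / sinh (-l-xi+\<eta>)^2)
       = (bfun \<eta> (-l+xi-\<eta>) * bfun \<eta> (-l-xi)) / (bfun \<eta> (-l-xi+\<eta>) * bfun \<eta> (-l+xi)) * inverse (bfun \<eta> (l - 2*\<eta> - xi))"
  using assms unfolding bfun_def cfun_def
  apply (simp add: field_simps)
  apply (thin_tac _)+
  unfolding sinh_field_def exp_minus exp_add exp_diff mult_2
  by (simp add: field_simps exp2 exp3, (simp add: algebra_simps power2_eq_square)?)




lemma gen_nzA: "generic \<eta> \<beta> N l \<Longrightarrow> -3 \<le> k \<Longrightarrow> k \<le> 3 \<Longrightarrow> sinh (l - bN \<beta> N + of_int k * \<eta>) \<noteq> 0"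
  by (simp add: generic_def)
lemma gen_nzB: "generic \<eta> \<beta> N l \<Longrightarrow> -3 \<le> k \<Longrightarrow> k \<le> 3 \<Longrightarrow> sinh (l + bN \<beta> N + of_int k * \<eta>) \<noteq> 0"
  by (simp add: generic_def)
lemma sinh_nz_eq: "sinh x \<noteq> 0 \<Longrightarrow> y = x \<Longrightarrow> sinh y \<noteq> 0" by simp
lemma sinh_nz_neg: "sinh x \<noteq> (0::complex) \<Longrightarrow> y = - x \<Longrightarrow> sinh y \<noteq> 0" by simp

definition h1f :: "complex \<Rightarrow> real \<Rightarrow> nat \<Rightarrow> complex \<Rightarrow> nat \<Rightarrow> c4" where
  "h1f \<eta> \<beta> N l i = (if even i then
     (1, sinh (l - bN \<beta> N) / sinh (l - bN \<beta> N - \<eta>), 0, - sinh \<eta> / sinh (l - bN \<beta> N - \<eta>))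
   else (sinh (-l - bN \<beta> N + \<eta>)^2/(sinh (-l - bN \<beta> N) * sinh (-l - bN \<beta> N + 2*\<eta>)),
         sinh (-l - bN \<beta> N + \<eta>)/sinh (-l - bN \<beta> N),
         - sinh \<eta> * sinh (-l - bN \<beta> N + \<eta>)/(sinh (-l - bN \<beta> N) * sinh (-l - bN \<beta> N + 2*\<eta>)), 0))"

definition ddf :: "complex \<Rightarrow> real \<Rightarrow> nat \<Rightarrow> complex \<Rightarrow> nat \<Rightarrow> complex" where
  "ddf \<eta> \<beta> N l i = (if even i then
      sinh (l - bN \<beta> N - \<eta>)^2/(sinh (l - bN \<beta> N) * sinh (l - bN \<beta> N - 2*\<eta>))
    else sinh (-l - bN \<beta> N) * sinh (-l - bN \<beta> N + 2*\<eta>)/sinh (-l - bN \<beta> N + \<eta>)^2)"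

lemma site_cross:
  assumes g: "generic \<eta> \<beta> N l"
  shows "ginvertible (gtup \<eta> \<beta> N l i) \<and> anti (gtup \<eta> \<beta> N l i) = h1f \<eta> \<beta> N l i \<and>
         ginvertible (h1f \<eta> \<beta> N l i) \<and> anti (h1f \<eta> \<beta> N l i) = gsm (ddf \<eta> \<beta> N l i) (gtup \<eta> \<beta> N (l - 2*\<eta>) i)"
proof (cases "even i")
  case True
  define v where "v = l - bN \<beta> N"
  have n0: "sinh v \<noteq> 0" by (rule sinh_nz_eq[OF gen_nzA[OF g, of 0]]) (simp_all add: v_def)
  have n1: "sinh (v + \<eta>) \<noteq> 0" by (rule sinh_nz_eq[OF gen_nzA[OF g, of 1]]) (simp_all add: v_def)
  have nm1: "sinh (v - \<eta>) \<noteq> 0" by (rule sinh_nz_eq[OF gen_nzA[OF g, of "-1"]]) (simp_all add: v_def)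
  have nm2: "sinh (v - 2*\<eta>) \<noteq> 0" by (rule sinh_nz_eq[OF gen_nzA[OF g, of "-2"]]) (simp_all add: v_def)
  have nm1': "sinh (v - 2*\<eta> + \<eta>) \<noteq> 0" by (rule sinh_nz_eq[OF gen_nzA[OF g, of "-1"]]) (simp_all add: v_def algebra_simps)
  note e1 = anti_eq[OF even_g[OF n1 nm1]]
  note e2 = anti_eq[OF even_h[OF n0 nm1 nm2 nm1']]
  have gt: "gtup \<eta> \<beta> N l i = (1, bfun \<eta> v, cfun \<eta> v, 0)" using True by (simp add: gtup_def v_def)
  have a2: "l - 2*\<eta> - bN \<beta> N = v - 2*\<eta>" by (simp add: v_def)
  have gt2: "gtup \<eta> \<beta> N (l - 2*\<eta>) i = (1, bfun \<eta> (v - 2*\<eta>), cfun \<eta> (v - 2*\<eta>), 0)"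
    using True by (simp add: gtup_def a2)
  have h1: "h1f \<eta> \<beta> N l i = (1, sinh v / sinh (v-\<eta>), 0, - sinh \<eta> / sinh (v-\<eta>))"
    using True by (simp add: h1f_def v_def)
  have d: "ddf \<eta> \<beta> N l i = sinh (v-\<eta>)^2 / (sinh v * sinh (v-2*\<eta>))"
    using True by (simp add: ddf_def v_def)
  show ?thesis unfolding gt gt2 h1 d using e1 e2 by simp
next
  case False
  define w where "w = - l - bN \<beta> N"
  have n0: "sinh w \<noteq> 0" by (rule sinh_nz_neg[OF gen_nzB[OF g, of 0]]) (simp_all add: w_def)
  have n1: "sinh (w + \<eta>) \<noteq> 0" by (rule sinh_nz_neg[OF gen_nzB[OF g, of "-1"]]) (simp_all add: w_def)
  have n2: "sinh (w + 2*\<eta>) \<noteq> 0" by (rule sinh_nz_neg[OF gen_nzB[OF g, of "-2"]]) (simp_all add: w_def)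
  have n3: "sinh (w + 2*\<eta> + \<eta>) \<noteq> 0" by (rule sinh_nz_neg[OF gen_nzB[OF g, of "-3"]]) (simp_all add: w_def algebra_simps)
  note e1 = anti_eq[OF odd_g[OF n0 n1 n2]]
  note e2 = anti_eq[OF odd_h[OF n0 n1 n2 n3]]
  have gt: "gtup \<eta> \<beta> N l i = (1, bfun \<eta> w, 0, cfun \<eta> w)" using False by (simp add: gtup_def w_def)
  have a2: "- (l - 2*\<eta>) - bN \<beta> N = w + 2*\<eta>" "2*\<eta> - l - bN \<beta> N = w + 2*\<eta>" by (simp_all add: w_def)
  have gt2: "gtup \<eta> \<beta> N (l - 2*\<eta>) i = (1, bfun \<eta> (w + 2*\<eta>), 0, cfun \<eta> (w + 2*\<eta>))"
    using False by (simp add: gtup_def a2)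
  have h1: "h1f \<eta> \<beta> N l i = (sinh(w+\<eta>)^2/(sinh w * sinh(w+2*\<eta>)), sinh(w+\<eta>)/sinh w, - sinh \<eta> * sinh(w+\<eta>)/(sinh w * sinh(w+2*\<eta>)), 0)"
    using False by (simp add: h1f_def w_def)
  have d: "ddf \<eta> \<beta> N l i = sinh w * sinh (w+2*\<eta>) / sinh (w+\<eta>)^2"
    using False by (simp add: ddf_def w_def)
  show ?thesis unfolding gt gt2 h1 d using e1 e2 by simp
qed


lemma prod_alt: "(\<Prod>i\<in>{1..2*n}. (if even i then a else b)) = ((a::complex)*b)^n"
proof (induction n)
  case 0 show ?case by simp
next
  case (Suc n)
  have "2 * Suc n = Suc (Suc (2*n))" by simp
  thus ?case using Suc by (simp add: prod.cl_ivl_Suc algebra_simps)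
qed

lemma Tplus_AP: "geq N (Tplus \<eta> \<beta> N z) (gsc (inverse (afun \<eta> \<beta> N (-z))) (AP N (gtup \<eta> \<beta> N z) N))"
proof -
  have "Tplus \<eta> \<beta> N z = gsc (inverse (afun \<eta> \<beta> N (-z))) (am_transp (qtm_prod \<eta> \<beta> N N (-z)))"
    unfolding Tplus_eq by (simp add: fun_eq_iff gsc_def TQTM_def)
  thus ?thesis by (simp add: gsc_cong transp_qtm)
qed

lemma crossing:
  assumes g: "generic \<eta> \<beta> N l" and ev: "even N"
  shows "am_invertible N (Tplus \<eta> \<beta> N l) \<and> am_invertible N (antipode N (Tplus \<eta> \<beta> N l)) \<and>
         am_eq N (antipode N (antipode N (Tplus \<eta> \<beta> N l)))
                 (\<lambda>a b s t. delta \<eta> \<beta> N l * Tplus \<eta> \<beta> N (l - 2 * \<eta>) a b s t)"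
proof -
  define xi where "xi = bN \<beta> N"
  define n where "n = N div 2"
  have Nn: "N = 2*n" using ev by (simp add: n_def)
  have A0: "sinh (l - xi) \<noteq> 0" by (rule sinh_nz_eq[OF gen_nzA[OF g, of 0]]) (simp_all add: xi_def)
  have A1: "sinh (l - xi + \<eta>) \<noteq> 0" by (rule sinh_nz_eq[OF gen_nzA[OF g, of 1]]) (simp_all add: xi_def)
  have Am1: "sinh (l - xi - \<eta>) \<noteq> 0" by (rule sinh_nz_eq[OF gen_nzA[OF g, of "-1"]]) (simp_all add: xi_def)
  have Am2: "sinh (l - xi - 2*\<eta>) \<noteq> 0" by (rule sinh_nz_eq[OF gen_nzA[OF g, of "-2"]]) (simp_all add: xi_def)
  have B0: "sinh (-l - xi) \<noteq> 0" by (rule sinh_nz_neg[OF gen_nzB[OF g, of 0]]) (simp_all add: xi_def)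
  have Bm1: "sinh (-l - xi + \<eta>) \<noteq> 0" by (rule sinh_nz_neg[OF gen_nzB[OF g, of "-1"]]) (simp_all add: xi_def)
  have Bm2: "sinh (-l - xi + 2*\<eta>) \<noteq> 0" by (rule sinh_nz_neg[OF gen_nzB[OF g, of "-2"]]) (simp_all add: xi_def)
  have C0: "sinh (-l + xi) \<noteq> 0" by (rule sinh_nz_neg[OF gen_nzA[OF g, of 0]]) (simp_all add: xi_def)
  have Cm1: "sinh (-l + xi + \<eta>) \<noteq> 0" by (rule sinh_nz_neg[OF gen_nzA[OF g, of "-1"]]) (simp_all add: xi_def)
  have C0': "sinh (-l + xi - \<eta> + \<eta>) \<noteq> 0" using C0 by simp
  have Bm2': "sinh (-l - xi + \<eta> + \<eta>) \<noteq> 0" by (rule sinh_nz_eq[OF Bm2]) simp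
  have Am2': "sinh (l - 2*\<eta> - xi) \<noteq> 0" by (rule sinh_nz_eq[OF Am2]) simp
  have Am1': "sinh (l - 2*\<eta> - xi + \<eta>) \<noteq> 0" by (rule sinh_nz_eq[OF Am1]) (simp add: algebra_simps)
  note DB = delta_base[OF A0 A1 Am1 Am2 B0 Bm1 Bm2 C0 Cm1 C0' Bm2' Am2' Am1']
  have af: "afun \<eta> \<beta> N (-z) = bfun \<eta> (z - xi) ^ n" for z
    by (simp add: afun_def n_def xi_def)
  have bnz: "bfun \<eta> (l - xi) \<noteq> 0" using A0 A1 by (simp add: bfun_def)
  define k where "k = inverse (afun \<eta> \<beta> N (-l))"
  define k' where "k' = inverse (afun \<eta> \<beta> N (-(l - 2*\<eta>)))"
  have knz: "k \<noteq> 0" unfolding k_def af using bnz by simp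
  note sc = site_cross[OF g]
  have inv1: "\<forall>i. 1 \<le> i \<and> i \<le> N \<longrightarrow> ginvertible (gtup \<eta> \<beta> N l i)" using sc by blast
  have inv2: "\<forall>i. 1 \<le> i \<and> i \<le> N \<longrightarrow> ginvertible (h1f \<eta> \<beta> N l i)" using sc by blast
  have ag: "(\<lambda>i. anti (gtup \<eta> \<beta> N l i)) = h1f \<eta> \<beta> N l" using sc by auto
  have ah: "(\<lambda>i. anti (h1f \<eta> \<beta> N l i)) = (\<lambda>i. gsm (ddf \<eta> \<beta> N l i) (gtup \<eta> \<beta> N (l - 2*\<eta>) i))" using sc by auto
  have S1: "am_invertible N (Tplus \<eta> \<beta> N l)"
    "geq N (antipode N (Tplus \<eta> \<beta> N l)) (gsc (inverse k) (AP N (h1f \<eta> \<beta> N l) N))"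
    using antipode_AP[OF knz inv1 Tplus_AP[of N \<eta> \<beta> l, folded k_def]] unfolding ag by auto
  have iknz: "inverse k \<noteq> 0" using knz by simp
  have S2: "am_invertible N (antipode N (Tplus \<eta> \<beta> N l))"
    "geq N (antipode N (antipode N (Tplus \<eta> \<beta> N l)))
       (gsc k (AP N (\<lambda>i. gsm (ddf \<eta> \<beta> N l i) (gtup \<eta> \<beta> N (l - 2*\<eta>) i)) N))"
    using antipode_AP[OF iknz inv2 S1(2)] unfolding ah by auto
  have pr: "(\<Prod>i\<in>{1..N}. ddf \<eta> \<beta> N l i) = (ddf \<eta> \<beta> N l 2 * ddf \<eta> \<beta> N l 1) ^ n"
  proof -
    have "(\<Prod>i\<in>{1..N}. ddf \<eta> \<beta> N l i) = (\<Prod>i\<in>{1..2*n}. (if even i then ddf \<eta> \<beta> N l 2 else ddf \<eta> \<beta> N l 1))"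
      unfolding Nn by (intro prod.cong refl) (simp add: ddf_def)
    also have "\<dots> = (ddf \<eta> \<beta> N l 2 * ddf \<eta> \<beta> N l 1) ^ n" by (rule prod_alt)
    finally show ?thesis .
  qed
  have scal: "k * (\<Prod>i\<in>{1..N}. ddf \<eta> \<beta> N l i) = delta \<eta> \<beta> N l * k'"
  proof -
    have "k * (\<Prod>i\<in>{1..N}. ddf \<eta> \<beta> N l i) = (inverse (bfun \<eta> (l - xi)) * ddf \<eta> \<beta> N l 2 * ddf \<eta> \<beta> N l 1) ^ n"
      unfolding pr k_def af by (simp add: power_mult_distrib power_inverse mult.assoc)
    also have "inverse (bfun \<eta> (l - xi)) * ddf \<eta> \<beta> N l 2 * ddf \<eta> \<beta> N l 1 =
        (bfun \<eta> (-l+xi-\<eta>) * bfun \<eta> (-l-xi)) / (bfun \<eta> (-l-xi+\<eta>) * bfun \<eta> (-l+xi)) * inverse (bfun \<eta> (l - 2*\<eta> - xi))"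
      using DB by (simp add: ddf_def xi_def)
    also have "(\<dots>) ^ n = delta \<eta> \<beta> N l * k'"
      unfolding k'_def af delta_def n_def[symmetric] xi_def
      by (simp only: power_mult_distrib power_inverse)
    finally show ?thesis .
  qed
  have "geq N (antipode N (antipode N (Tplus \<eta> \<beta> N l)))
       (gsc k (gsc (\<Prod>i\<in>{1..N}. ddf \<eta> \<beta> N l i) (AP N (gtup \<eta> \<beta> N (l - 2*\<eta>)) N)))"
    by (rule geq_trans[OF S2(2)], rule gsc_cong, rule AP_scale, rule le_refl)
  also have "gsc k (gsc (\<Prod>i\<in>{1..N}. ddf \<eta> \<beta> N l i) (AP N (gtup \<eta> \<beta> N (l - 2*\<eta>)) N)) =
       gsc (delta \<eta> \<beta> N l) (gsc k' (AP N (gtup \<eta> \<beta> N (l - 2*\<eta>)) N))"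
    by (simp only: gsc_gsc scal)
  also have "geq N \<dots> (gsc (delta \<eta> \<beta> N l) (Tplus \<eta> \<beta> N (l - 2*\<eta>)))"
    unfolding k'_def by (rule gsc_cong, rule geq_sym, rule Tplus_AP)
  also have "gsc (delta \<eta> \<beta> N l) (Tplus \<eta> \<beta> N (l - 2*\<eta>)) =
       (\<lambda>a b s t. delta \<eta> \<beta> N l * Tplus \<eta> \<beta> N (l - 2 * \<eta>) a b s t)"
    by (simp add: fun_eq_iff gsc_def)
  finally show ?thesis using S1(1) S2(1) unfolding am_eq_geq by simp
qed


theorem mainTheorem8:
  fixes \<eta> :: complex and \<beta> :: real and N :: nat
  assumes "\<beta> > 0" and "even N" and "N > 0"
  shows "(\<forall>l \<mu>. generic \<eta> \<beta> N l \<and> generic \<eta> \<beta> N \<mu> \<and> sinh (l - \<mu> + \<eta>) \<noteq> 0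
              \<longrightarrow> RTT \<eta> N (Tplus \<eta> \<beta> N) l \<mu>)
       \<and> (\<forall>l. generic \<eta> \<beta> N l \<longrightarrow>
              am_invertible N (Tplus \<eta> \<beta> N l)
            \<and> am_invertible N (antipode N (Tplus \<eta> \<beta> N l))
            \<and> am_eq N (antipode N (antipode N (Tplus \<eta> \<beta> N l)))
                     (\<lambda>a b s t. delta \<eta> \<beta> N l * Tplus \<eta> \<beta> N (l - 2 * \<eta>) a b s t))"
proof (intro conjI allI impI)
  fix l \<mu> assume h: "generic \<eta> \<beta> N l \<and> generic \<eta> \<beta> N \<mu> \<and> sinh (l - \<mu> + \<eta>) \<noteq> 0"
  hence gl: "generic \<eta> \<beta> N l" and gm: "generic \<eta> \<beta> N \<mu>" and c0: "sinh (l - \<mu> + \<eta>) \<noteq> 0" by auto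
  have e1: "sinh (l - bN \<beta> N + \<eta>) \<noteq> 0" by (rule sinh_nz_eq[OF gen_nzA[OF gl, of 1]]) simp_all
  have e2: "sinh (\<mu> - bN \<beta> N + \<eta>) \<noteq> 0" by (rule sinh_nz_eq[OF gen_nzA[OF gm, of 1]]) simp_all
  have o1: "sinh (- l - bN \<beta> N + \<eta>) \<noteq> 0" by (rule sinh_nz_neg[OF gen_nzB[OF gl, of "-1"]]) simp_all
  have o2: "sinh (- \<mu> - bN \<beta> N + \<eta>) \<noteq> 0" by (rule sinh_nz_neg[OF gen_nzB[OF gm, of "-1"]]) simp_all
  show "RTT \<eta> N (Tplus \<eta> \<beta> N) l \<mu>" by (rule RTT_Tplus[OF assms(3) c0 e1 e2 o1 o2])
next
  fix l assume g: "generic \<eta> \<beta> N l"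
  note C = crossing[OF g assms(2)]
  show "am_invertible N (Tplus \<eta> \<beta> N l)" using C by simp
  show "am_invertible N (antipode N (Tplus \<eta> \<beta> N l))" using C by simp
  show "am_eq N (antipode N (antipode N (Tplus \<eta> \<beta> N l)))
                     (\<lambda>a b s t. delta \<eta> \<beta> N l * Tplus \<eta> \<beta> N (l - 2 * \<eta>) a b s t)" using C by simp
qed

end
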